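(* There is a constant $C$ independent of $n$ such that $$\mathbb E\big(\|\delta\mathcal T^\xi\|^2\big)\le C\,(\log n+1)\,n^{-3}.$$
   Context: Let $\Omega=[x_L,x_R]$ be a bounded interval. Let $\sigma_T,\sigma_S$ be continuous on $\Omega$ with $0<\sigma_S<\sigma_T$; $\lambda=\|\sigma_S/\sigma_T\|_\infty\in(0,1)$, $\sigma_r=\sigma_S/\lambda$. $L^2(\sigma_T)$ is $L^2(\Omega)$ with inner product $\langle f,g\rangle=\int_{x_L}^{x_R}fg\,\sigma_T\,dx$; operator norms refer to this space. For $\mu\in[-1,1]\setminus\{0\}$, $\mathcal A_\mu$ maps $\phi$ to the solution $\psi$ of $\mu\psi'+\sigma_T\psi=\sigma_r\phi$ on $\Omega$ with $\psi(x_L)=0$ if $\mu>0$, $\psi(x_R)=0$ if $\mu<0$; explicitly $(\mathcal A_\mu\phi)(x)=\int k_\mu(x,y)\phi(y)\sigma_T(y)dy$ with $k_\mu(x,y)=\frac1\mu\mathbb 1_{y\le x}e^{-\frac1\mu\int_y^x\sigma_T}\frac{\sigma_r(y)}{\sigma_T(y)}$ ($\mu>0$), $k_\mu(x,y)=-\frac1\mu\mathbb 1_{y\ge x}e^{\frac1\mu\int_x^y\sigma_T}\frac{\sigma_r(y)}{\sigma_T(y)}$ ($\mu<0$). Truncated velocity set: fix $\delta\in(0,1)$, $S=[-1,-\delta)\cup(\delta,1]$, $\fint_S=\frac1{|S|}\int_S$. Let $n=2m$; partition $[-1,-\delta)$ into intervals $S_1,\dots,S_m$, $S_{n+1-\ell}=-S_\ell$;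 for $\ell\le m$, $\mu_\ell$ independent and uniform on $S_\ell$, $\mu_{n+1-\ell}=-\mu_\ell$. $\omega_\ell=|S_\ell|/|S|$, $\alpha_\ell=n\omega_\ell$, and $\alpha_\ell\le\bar\alpha$ for all $\ell,n$ with $\bar\alpha$ independent of $n$. $\mathcal T=\fint_S\mathcal A_\mu d\mu$, $\mathcal T^\xi=\sum_{\ell=1}^n\omega_\ell\mathcal A_{\mu_\ell}$, and $\delta\mathcal T^\xi=\mathcal T^\xi-\mathcal T$. $\mathbb E$ is expectation over the random ordinates. *)

theory Defs
  imports "HOL-Analysis.Analysis"
begin

text \<open>Parameters: domain [xL,xR], total cross section sT, scattering cross section sS.\<close>

definition lam :: "real \<Rightarrow> real \<Rightarrow> (real \<Rightarrow> real) \<Rightarrow> (real \<Rightarrow> real) \<Rightarrow> real" where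
  "lam xL xR sT sS = (SUP x\<in>{xL..xR}. sS x / sT x)"

definition sigr :: "real \<Rightarrow> real \<Rightarrow> (real \<Rightarrow> real) \<Rightarrow> (real \<Rightarrow> real) \<Rightarrow> real \<Rightarrow> real" where
  "sigr xL xR sT sS y = sS y / lam xL xR sT sS"

definition kern :: "real \<Rightarrow> real \<Rightarrow> (real \<Rightarrow> real) \<Rightarrow> (real \<Rightarrow> real) \<Rightarrow> real \<Rightarrow> real \<Rightarrow> real \<Rightarrow> real" where
  "kern xL xR sT sS \<mu> x y =
     (if 0 < \<mu> then
        (if y \<le> x then (1 / \<mu>) * exp (- (1 / \<mu>) * (LINT s:{y..x}|lborel. sT s)) * (sigr xL xR sT sS y / sT y)
         else 0)
      else if \<mu> < 0 then
        (if x \<le> y then - (1 / \<mu>) * exp ((1 / \<mu>) * (LINT s:{x..y}|lborel. sT s)) * (sigr xL xR sT sS y / sT y)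
         else 0)
      else 0)"

definition Aop :: "real \<Rightarrow> real \<Rightarrow> (real \<Rightarrow> real) \<Rightarrow> (real \<Rightarrow> real) \<Rightarrow> real \<Rightarrow> (real \<Rightarrow> real) \<Rightarrow> real \<Rightarrow> real" where
  "Aop xL xR sT sS \<mu> \<phi> x = (LINT y:{xL..xR}|lborel. kern xL xR sT sS \<mu> x y * \<phi> y * sT y)"

definition L2w :: "real \<Rightarrow> real \<Rightarrow> (real \<Rightarrow> real) \<Rightarrow> (real \<Rightarrow> real) set" where
  "L2w xL xR sT = {\<phi>. \<phi> \<in> borel_measurable lborel \<and> set_integrable lborel {xL..xR} (\<lambda>x. (\<phi> x)\<^sup>2 * sT x)}"

definition wnorm :: "real \<Rightarrow> real \<Rightarrow> (real \<Rightarrow> real) \<Rightarrow> (real \<Rightarrow> real) \<Rightarrow> real" where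
  "wnorm xL xR sT f = sqrt (LINT x:{xL..xR}|lborel. (f x)\<^sup>2 * sT x)"

text \<open>Operator norm on L^2(sigma_T), valued in ennreal (so that it is meaningful even if infinite).\<close>
definition opnorm :: "real \<Rightarrow> real \<Rightarrow> (real \<Rightarrow> real) \<Rightarrow> ((real \<Rightarrow> real) \<Rightarrow> (real \<Rightarrow> real)) \<Rightarrow> ennreal" where
  "opnorm xL xR sT K = (SUP \<phi> \<in> {\<phi> \<in> L2w xL xR sT. wnorm xL xR sT \<phi> \<le> 1}. ennreal (wnorm xL xR sT (K \<phi>)))"

definition Svel :: "real \<Rightarrow> real set" where
  "Svel \<delta> = {-1..<-\<delta>} \<union> {\<delta><..1}"

definition Tavg :: "real \<Rightarrow> real \<Rightarrow> (real \<Rightarrow> real) \<Rightarrow> (real \<Rightarrow> real) \<Rightarrow> real \<Rightarrow> (real \<Rightarrow> real) \<Rightarrow> real \<Rightarrow> real" where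
  "Tavg xL xR sT sS \<delta> \<phi> x =
     (1 / measure lborel (Svel \<delta>)) * (LINT \<mu>:Svel \<delta>|lborel. Aop xL xR sT sS \<mu> \<phi> x)"

text \<open>Partition of [-1,-delta) by points t 0 < t 1 < ... < t m, S_l = [t l, t (l+1)) (0-based);
  the mirrored intervals -S_l carry the ordinates -mu_l. Weight omega_l = |S_l| / |S|.\<close>
definition omega :: "real \<Rightarrow> (nat \<Rightarrow> real) \<Rightarrow> nat \<Rightarrow> real" where
  "omega \<delta> t l = (t (Suc l) - t l) / measure lborel (Svel \<delta>)"

definition Txi :: "real \<Rightarrow> real \<Rightarrow> (real \<Rightarrow> real) \<Rightarrow> (real \<Rightarrow> real) \<Rightarrow> real \<Rightarrow> nat \<Rightarrow> (nat \<Rightarrow> real)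
    \<Rightarrow> (nat \<Rightarrow> real) \<Rightarrow> (real \<Rightarrow> real) \<Rightarrow> real \<Rightarrow> real" where
  "Txi xL xR sT sS \<delta> m t \<mu>s \<phi> x =
     (\<Sum>l<m. omega \<delta> t l * (Aop xL xR sT sS (\<mu>s l) \<phi> x + Aop xL xR sT sS (- \<mu>s l) \<phi> x))"

definition dTxi :: "real \<Rightarrow> real \<Rightarrow> (real \<Rightarrow> real) \<Rightarrow> (real \<Rightarrow> real) \<Rightarrow> real \<Rightarrow> nat \<Rightarrow> (nat \<Rightarrow> real)
    \<Rightarrow> (nat \<Rightarrow> real) \<Rightarrow> (real \<Rightarrow> real) \<Rightarrow> real \<Rightarrow> real" where
  "dTxi xL xR sT sS \<delta> m t \<mu>s \<phi> x = Txi xL xR sT sS \<delta> m t \<mu>s \<phi> x - Tavg xL xR sT sS \<delta> \<phi> x"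

definition ordinate_law :: "nat \<Rightarrow> (nat \<Rightarrow> real) \<Rightarrow> (nat \<Rightarrow> real) measure" where
  "ordinate_law m t = PiM {..<m} (\<lambda>l. uniform_measure lborel {t l..<t (Suc l)})"

end

theory Submission
  imports Defs "HOL-Probability.Probability"
begin


locale six =
  fixes xL xR :: real and sT sS :: "real \<Rightarrow> real" and \<delta> :: real
  assumes lt: "xL < xR" and cT: "continuous_on {xL..xR} sT" and cS: "continuous_on {xL..xR} sS"
    and pos: "\<forall>x\<in>{xL..xR}. 0 < sS x \<and> sS x < sT x" and d0: "0 < \<delta>" and d1: "\<delta> < 1"
begin

definition cl :: "real \<Rightarrow> real" where "cl z = max xL (min xR z)"
definition lamv where "lamv = lam xL xR sT sS"
definition G :: "real \<Rightarrow> real" where "G z = integral {xL..cl z} sT"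
definition W :: real where "W = integral {xL..xR} sT"
definition rc :: "real \<Rightarrow> real" where "rc z = sS (cl z) / (lamv * sT (cl z))"
definition ee :: "real \<Rightarrow> real \<Rightarrow> real" where "ee \<nu> I = (1/\<nu>) * exp (-(I/\<nu>))"
definition Kc :: "real \<Rightarrow> real \<Rightarrow> real \<Rightarrow> real" where
  "Kc \<mu> x y = (if 0 < \<mu> then (if y \<le> x then ee \<mu> (G x - G y) * rc y else 0)
     else if \<mu> < 0 then (if x \<le> y then ee (-\<mu>) (G y - G x) * rc y else 0) else 0)"
definition kb :: "real \<Rightarrow> real" where "kb \<mu> = (if \<mu> = 0 then 0 else 1 / \<bar>\<mu>\<bar>)"

lemma cl_in: "cl z \<in> {xL..xR}" using lt by (auto simp: cl_def)
lemma cl_id: "z \<in> {xL..xR} \<Longrightarrow> cl z = z" by (auto simp: cl_def)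
lemma cl_mono: "u \<le> v \<Longrightarrow> cl u \<le> cl v" by (auto simp: cl_def)
lemma cl_cont: "continuous_on UNIV cl" unfolding cl_def by (intro continuous_intros)

lemma sT_pos: "x \<in> {xL..xR} \<Longrightarrow> 0 < sT x" using pos by force
lemma sS_pos: "x \<in> {xL..xR} \<Longrightarrow> 0 < sS x" using pos by force
lemma sT_pos': "xL \<le> x \<Longrightarrow> x \<le> xR \<Longrightarrow> 0 < sT x" using pos by force
lemma sT_ne: "x \<in> {xL..xR} \<Longrightarrow> sT x \<noteq> 0" using sT_pos by force

lemma ratio_bdd: "bdd_above ((\<lambda>x. sS x / sT x) ` {xL..xR})"
proof -
  have "continuous_on {xL..xR} (\<lambda>x. sS x / sT x)"
    using cT cS sT_ne by (intro continuous_intros) auto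
  then have "compact ((\<lambda>x. sS x / sT x) ` {xL..xR})"
    by (intro compact_continuous_image) auto
  then show ?thesis by (intro bounded_imp_bdd_above compact_imp_bounded)
qed

lemma ratio_le: "x \<in> {xL..xR} \<Longrightarrow> sS x / sT x \<le> lamv"
  unfolding lamv_def lam_def using ratio_bdd by (intro cSUP_upper) auto

lemma lam_pos: "0 < lamv"
proof -
  have "0 < sS xL / sT xL" using sT_pos sS_pos lt by auto
  also have "\<dots> \<le> lamv" using ratio_le lt by auto
  finally show ?thesis .
qed

lemma rc_pos: "0 < rc z" using cl_in sT_pos sS_pos lam_pos unfolding rc_def by auto
lemma rc_le1: "rc z \<le> 1"
proof -
  have "sS (cl z) / sT (cl z) \<le> lamv" using ratio_le cl_in by auto
  then show ?thesis using cl_in[of z] sT_pos[of "cl z"] lam_pos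
    unfolding rc_def by (auto simp: field_simps)
qed

lemma rc_cont: "continuous_on UNIV rc"
proof -
  have "continuous_on UNIV (\<lambda>z. (\<lambda>u. sS u / (lamv * sT u)) (cl z))"
  proof (rule continuous_on_compose2[of "{xL..xR}" "\<lambda>u. sS u / (lamv * sT u)"])
    show "continuous_on {xL..xR} (\<lambda>u. sS u / (lamv * sT u))"
      using cT cS sT_ne lam_pos by (intro continuous_intros) auto
  qed (use cl_cont cl_in in auto)
  then show ?thesis unfolding rc_def by simp
qed

lemma sigr_eq: "y \<in> {xL..xR} \<Longrightarrow> sigr xL xR sT sS y / sT y = rc y"
  unfolding sigr_def rc_def lamv_def by (simp add: cl_id)

lemma sT_int: "sT integrable_on {xL..xR}"
  using cT by (rule integrable_continuous_interval)

lemma sT_int_sub: "{u..v} \<subseteq> {xL..xR} \<Longrightarrow> sT integrable_on {u..v}"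
  using cT by (meson continuous_on_subset integrable_continuous_interval)

lemma G0_cont: "continuous_on {xL..xR} (\<lambda>z. integral {xL..z} sT)"
  using sT_int by (rule indefinite_integral_continuous_1)

lemma G_cont: "continuous_on UNIV G"
  unfolding G_def
  by (rule continuous_on_compose2[OF G0_cont cl_cont]) (use cl_in in auto)

lemma int_split: assumes "xL \<le> u" "u \<le> v" "v \<le> xR"
  shows "integral {xL..v} sT = integral {xL..u} sT + integral {u..v} sT"
  using Henstock_Kurzweil_Integration.integral_combine[OF assms(1,2) sT_int_sub] assms by auto

lemma int_nonneg: assumes "{u..v} \<subseteq> {xL..xR}" shows "0 \<le> integral {u..v} sT"
  using sT_int_sub[OF assms] assms by (intro integral_nonneg) (auto intro!: less_imp_le[OF sT_pos'])

lemma G_diff: "u \<le> v \<Longrightarrow> G v - G u = integral {cl u..cl v} sT"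
  unfolding G_def using int_split[of "cl u" "cl v"] cl_in cl_mono by auto

lemma G_mono: "u \<le> v \<Longrightarrow> G u \<le> G v"
  using G_diff[of u v] int_nonneg[of "cl u" "cl v"] cl_in by auto

lemma G_range: "0 \<le> G z \<and> G z \<le> W"
proof -
  have "0 \<le> integral {xL..cl z} sT" using cl_in by (intro int_nonneg) auto
  moreover have "integral {xL..xR} sT = integral {xL..cl z} sT + integral {cl z..xR} sT"
    using int_split[of "cl z" xR] cl_in by auto
  moreover have "0 \<le> integral {cl z..xR} sT" using cl_in by (intro int_nonneg) auto
  ultimately show ?thesis unfolding G_def W_def by auto
qed

lemma W_nonneg: "0 \<le> W" using G_range[of 0] by auto

lemma lint_eq: assumes "x \<in> {xL..xR}" "y \<in> {xL..xR}" "y \<le> x"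
  shows "(LINT s:{y..x}|lborel. sT s) = G x - G y"
proof -
  have sub: "{y..x} \<subseteq> {xL..xR}" using assms by auto
  have "set_integrable lborel {y..x} sT"
    unfolding set_integrable_def
    by (rule borel_integrable_compact) (use continuous_on_subset[OF cT sub] in auto)
  then have "(LINT s:{y..x}|lborel. sT s) = integral {y..x} sT"
    by (rule set_borel_integral_eq_integral)
  also have "\<dots> = G x - G y" using G_diff[of y x] assms by (simp add: cl_id)
  finally show ?thesis .
qed

lemma kern_eq: assumes "x \<in> {xL..xR}" "y \<in> {xL..xR}"
  shows "kern xL xR sT sS \<mu> x y = Kc \<mu> x y"
  using assms lint_eq[OF assms(1,2)] lint_eq[OF assms(2,1)] sigr_eq[OF assms(2)]
  unfolding kern_def Kc_def ee_def by (auto simp: field_simps)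

lemma ee_bound: "0 < \<nu> \<Longrightarrow> 0 \<le> I \<Longrightarrow> 0 \<le> ee \<nu> I \<and> ee \<nu> I \<le> 1/\<nu>"
  unfolding ee_def by (auto simp: field_simps)

lemma Kc_bound: "\<bar>Kc \<mu> x y\<bar> \<le> kb \<mu>"
proof -
  have r: "0 \<le> rc y" "rc y \<le> 1" using rc_pos[of y] rc_le1[of y] by auto
  have a: "\<bar>ee \<nu> I * rc y\<bar> \<le> 1/\<nu>" if "0 < \<nu>" "0 \<le> I" for \<nu> I
  proof -
    have "\<bar>ee \<nu> I * rc y\<bar> = ee \<nu> I * rc y" using ee_bound[OF that] r by simp
    also have "\<dots> \<le> ee \<nu> I * 1" using ee_bound[OF that] r by (intro mult_left_mono) auto
    finally show ?thesis using ee_bound[OF that] by simp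
  qed
  show ?thesis
    unfolding Kc_def kb_def
    using a[of \<mu> "G x - G y"] a[of "-\<mu>" "G y - G x"] G_mono[of y x] G_mono[of x y]
    by (auto simp: abs_if)
qed

lemma G_meas[measurable]: "G \<in> borel_measurable borel"
  using G_cont by (rule borel_measurable_continuous_onI)
lemma rc_meas[measurable]: "rc \<in> borel_measurable borel"
  using rc_cont by (rule borel_measurable_continuous_onI)


lemma Kc_meas[measurable (raw)]:
  assumes "f \<in> borel_measurable M" "g \<in> borel_measurable M" "h \<in> borel_measurable M"
  shows "(\<lambda>z. Kc (f z) (g z) (h z)) \<in> borel_measurable M"
  unfolding Kc_def ee_def using assms by measurable

end

context six begin

definition LL :: real where "LL = 1/\<delta>^2 + W/\<delta>^3"

lemma ee_lip_aux: assumes "\<delta> \<le> a" "a < b" "0 \<le> I" "I \<le> W"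
  shows "\<bar>ee b I - ee a I\<bar> \<le> LL * (b - a)"
proof -
  define f' where "f' = (\<lambda>z::real. - (1/z^2) * exp (-(I/z)) + (1/z) * (exp (-(I/z)) * (I/z^2)))"
  have der: "DERIV (\<lambda>z. ee z I) z :> f' z" if "a \<le> z" "z \<le> b" for z
  proof -
    have z0: "z \<noteq> 0" using that assms d0 by auto
    show ?thesis unfolding ee_def f'_def
      by (rule derivative_eq_intros refl | use z0 in \<open>simp add: power2_eq_square field_simps\<close>)+
  qed
  obtain z where z: "a < z" "z < b" "ee b I - ee a I = (b - a) * f' z"
    using MVT2[OF assms(2) der] by blast
  have zd: "\<delta> \<le> z" using z assms by auto
  have z0: "0 < z" using zd d0 by auto
  have ex: "0 < exp (-(I/z))" "exp (-(I/z)) \<le> 1" using z0 assms by auto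
  have "\<bar>f' z\<bar> \<le> 1/z^2 + I/z^3"
  proof -
    have "\<bar>f' z\<bar> \<le> \<bar>(1/z^2) * exp (-(I/z))\<bar> + \<bar>(1/z) * (exp (-(I/z)) * (I/z^2))\<bar>"
      unfolding f'_def by (rule order_trans[OF abs_triangle_ineq]) simp
    also have "\<dots> = (1/z^2) * exp (-(I/z)) + exp (-(I/z)) * (I/z^3)"
      using z0 assms ex by (simp add: abs_mult power3_eq_cube power2_eq_square)
    also have "\<dots> \<le> (1/z^2) * 1 + 1 * (I/z^3)"
      using ex z0 assms by (intro add_mono mult_left_mono mult_right_mono) auto
    finally show ?thesis by simp
  qed
  also have "\<dots> \<le> 1/\<delta>^2 + W/\<delta>^3"
  proof (intro add_mono)
    show "1/z^2 \<le> 1/\<delta>^2" using zd d0 by (intro divide_left_mono power_mono) auto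
    have "I/z^3 \<le> W/z^3" using assms z0 by (intro divide_right_mono) auto
    also have "\<dots> \<le> W/\<delta>^3" using zd d0 W_nonneg by (intro divide_left_mono power_mono) auto
    finally show "I/z^3 \<le> W/\<delta>^3" .
  qed
  finally have "\<bar>f' z\<bar> \<le> LL" unfolding LL_def .
  then have "\<bar>(b - a) * f' z\<bar> \<le> (b - a) * LL" using z assms
    by (simp add: abs_mult mult_left_mono)
  then show ?thesis using z by (simp add: mult.commute)
qed

lemma LL_nonneg: "0 \<le> LL" unfolding LL_def using d0 W_nonneg by auto

lemma ee_lip: assumes "\<delta> \<le> a" "\<delta> \<le> b" "0 \<le> I" "I \<le> W"
  shows "\<bar>ee b I - ee a I\<bar> \<le> LL * \<bar>b - a\<bar>"
proof (cases a b rule: linorder_cases)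
  case less then show ?thesis using ee_lip_aux[of a b I] assms by auto
next
  case greater then show ?thesis using ee_lip_aux[of b a I] assms by (auto simp: abs_minus_commute)
qed simp

definition H :: "real \<Rightarrow> real \<Rightarrow> real \<Rightarrow> real" where "H x y \<mu> = Kc \<mu> x y + Kc (-\<mu>) x y"

lemma Kc_neg: "\<mu> < 0 \<Longrightarrow> Kc \<mu> x y = (if x \<le> y then ee (-\<mu>) (G y - G x) * rc y else 0)"
  unfolding Kc_def by auto
lemma Kc_negpos: "\<mu> < 0 \<Longrightarrow> Kc (-\<mu>) x y = (if y \<le> x then ee (-\<mu>) (G x - G y) * rc y else 0)"
  unfolding Kc_def by auto

lemma Gdiff_range: "u \<le> v \<Longrightarrow> 0 \<le> G v - G u \<and> G v - G u \<le> W"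
  using G_mono[of u v] G_range[of u] G_range[of v] by auto

lemma H_lip: assumes "\<mu>1 \<le> -\<delta>" "\<mu>2 \<le> -\<delta>"
  shows "\<bar>H x y \<mu>1 - H x y \<mu>2\<bar> \<le> 2 * LL * \<bar>\<mu>1 - \<mu>2\<bar>"
proof -
  have n: "\<mu>1 < 0" "\<mu>2 < 0" using assms d0 by auto
  have r: "0 \<le> rc y" "rc y \<le> 1" using rc_pos[of y] rc_le1[of y] by auto
  have one: "\<bar>(ee (-\<mu>1) I * rc y) - (ee (-\<mu>2) I * rc y)\<bar> \<le> LL * \<bar>\<mu>1 - \<mu>2\<bar>"
    if "0 \<le> I" "I \<le> W" for I
  proof -
    have "\<bar>(ee (-\<mu>1) I * rc y) - (ee (-\<mu>2) I * rc y)\<bar> = \<bar>ee (-\<mu>1) I - ee (-\<mu>2) I\<bar> * rc y"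
      using r by (simp add: left_diff_distrib[symmetric] abs_mult)
    also have "\<dots> \<le> \<bar>ee (-\<mu>1) I - ee (-\<mu>2) I\<bar> * 1" using r by (intro mult_left_mono) auto
    also have "\<dots> \<le> LL * \<bar>(-\<mu>1) - (-\<mu>2)\<bar>" using ee_lip[of "-\<mu>2" "-\<mu>1" I] that assms by simp
    finally show ?thesis by (simp add: abs_minus_commute)
  qed
  have a: "\<bar>Kc \<mu>1 x y - Kc \<mu>2 x y\<bar> \<le> LL * \<bar>\<mu>1 - \<mu>2\<bar>"
    using Kc_neg[OF n(1)] Kc_neg[OF n(2)] one[of "G y - G x"] Gdiff_range[of x y] LL_nonneg
    by auto
  have b: "\<bar>Kc (-\<mu>1) x y - Kc (-\<mu>2) x y\<bar> \<le> LL * \<bar>\<mu>1 - \<mu>2\<bar>"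
    using Kc_negpos[OF n(1)] Kc_negpos[OF n(2)] one[of "G x - G y"] Gdiff_range[of y x] LL_nonneg
    by auto
  have "\<bar>H x y \<mu>1 - H x y \<mu>2\<bar> \<le> \<bar>Kc \<mu>1 x y - Kc \<mu>2 x y\<bar> + \<bar>Kc (-\<mu>1) x y - Kc (-\<mu>2) x y\<bar>"
    unfolding H_def by linarith
  then show ?thesis using a b by linarith
qed

end


lemma bnd_set_int:
  fixes f :: "real \<Rightarrow> real"
  assumes [measurable]: "f \<in> borel_measurable borel" "A \<in> sets borel"
    and fin: "emeasure lborel A < \<infinity>" and b: "\<And>x. x \<in> A \<Longrightarrow> \<bar>f x\<bar> \<le> B"
  shows "set_integrable lborel A f"
  unfolding set_integrable_def
  by (rule integrableI_bounded_set[where A=A and B=B]) (use fin b in \<open>auto simp: indicator_def\<close>)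

lemma quad_cs: fixes A B C :: real
  assumes h: "\<And>t. 0 \<le> A - 2*t*B + t^2*C" and C: "0 \<le> C"
  shows "B^2 \<le> A * C"
proof (cases "C = 0")
  case True
  show ?thesis
  proof (rule ccontr)
    assume "\<not> ?thesis"
    then have "B \<noteq> 0" using True by auto
    then show False using h[of "(A+1)/(2*B)"] True by (simp add: field_simps)
  qed
next
  case False
  then have Cp: "0 < C" using C by auto
  have "0 \<le> A - 2*(B/C)*B + (B/C)^2*C" by (rule h)
  also have "\<dots> = A - B^2/C" using Cp by (simp add: field_simps power2_eq_square)
  finally show ?thesis using Cp by (simp add: field_simps)
qed

lemma weighted_cs:
  fixes f g w :: "'a \<Rightarrow> real"
  assumes i1: "integrable M (\<lambda>x. (f x)^2 * w x)" and i2: "integrable M (\<lambda>x. (g x)^2 * w x)"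
    and i3: "integrable M (\<lambda>x. f x * g x * w x)" and w: "\<And>x. 0 \<le> w x"
  shows "(\<integral>x. f x * g x * w x \<partial>M)^2 \<le> (\<integral>x. (f x)^2 * w x \<partial>M) * (\<integral>x. (g x)^2 * w x \<partial>M)"
proof (rule quad_cs)
  fix t :: real
  have "0 \<le> (\<integral>x. (f x - t * g x)^2 * w x \<partial>M)"
    using w by (intro integral_nonneg_AE) auto
  also have "(\<integral>x. (f x - t * g x)^2 * w x \<partial>M) =
      (\<integral>x. (f x)^2 * w x - 2*t * (f x * g x * w x) + t^2 * ((g x)^2 * w x) \<partial>M)"
    by (intro Bochner_Integration.integral_cong) (auto simp: power2_eq_square algebra_simps)
  also have "\<dots> = (\<integral>x. (f x)^2 * w x \<partial>M) - 2*t*(\<integral>x. f x * g x * w x \<partial>M) + t^2 * (\<integral>x. (g x)^2 * w x \<partial>M)"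
    using i1 i2 i3 by simp
  finally show "0 \<le> (\<integral>x. (f x)^2 * w x \<partial>M) - 2*t*(\<integral>x. f x * g x * w x \<partial>M) + t^2 * (\<integral>x. (g x)^2 * w x \<partial>M)" .
next
  show "0 \<le> (\<integral>x. (g x)^2 * w x \<partial>M)" using w by (intro integral_nonneg_AE) auto
qed

lemma uniform_Ico_eq:
  fixes c d :: real assumes "c < d"
  shows "uniform_measure lborel {c..<d} = density lborel (\<lambda>x. ennreal (indicator {c..<d} x / (d - c)))"
  unfolding uniform_measure_def using assms
  by (intro density_cong) (auto simp: divide_ennreal[symmetric] split: split_indicator)

lemma integral_uniform_Ico:
  fixes c d :: real and f :: "real \<Rightarrow> real"
  assumes "c < d" and [measurable]: "f \<in> borel_measurable borel"
  shows "(\<integral>x. f x \<partial>uniform_measure lborel {c..<d}) = (\<integral>x. indicator {c..<d} x * f x \<partial>lborel) / (d - c)"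
proof -
  have "(\<integral>x. f x \<partial>uniform_measure lborel {c..<d}) = (\<integral>x. (indicator {c..<d} x / (d - c)) *\<^sub>R f x \<partial>lborel)"
    unfolding uniform_Ico_eq[OF assms(1)] using assms(1)
    by (subst integral_density) auto
  also have "\<dots> = (\<integral>x. (indicator {c..<d} x * f x) / (d - c) \<partial>lborel)"
    by (intro Bochner_Integration.integral_cong) auto
  also have "\<dots> = (\<integral>x. indicator {c..<d} x * f x \<partial>lborel) / (d - c)"
    by (rule integral_divide_zero)
  finally show ?thesis .
qed


lemma (in pair_sigma_finite) integrable_mult_pair:
  fixes f :: "'a \<Rightarrow> real" and g :: "'b \<Rightarrow> real"
  assumes f: "integrable M1 f" and g: "integrable M2 g"
  shows "integrable (M1 \<Otimes>\<^sub>M M2) (\<lambda>z. f (fst z) * g (snd z))"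
proof (subst integrable_iff_bounded, intro conjI)
  have [measurable]: "f \<in> borel_measurable M1" "g \<in> borel_measurable M2" using f g by auto
  show "(\<lambda>z. f (fst z) * g (snd z)) \<in> borel_measurable (M1 \<Otimes>\<^sub>M M2)" by measurable
  have "(\<integral>\<^sup>+z. ennreal (norm (f (fst z) * g (snd z))) \<partial>(M1 \<Otimes>\<^sub>M M2))
      = (\<integral>\<^sup>+x. \<integral>\<^sup>+y. ennreal (norm (f x)) * ennreal (norm (g y)) \<partial>M2 \<partial>M1)"
    by (subst M2.nn_integral_fst[symmetric]) (auto simp: ennreal_mult abs_mult)
  also have "\<dots> = (\<integral>\<^sup>+x. ennreal (norm (f x)) * (\<integral>\<^sup>+y. ennreal (norm (g y)) \<partial>M2) \<partial>M1)"
    by (subst nn_integral_cmult) auto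
  also have "\<dots> = (\<integral>\<^sup>+x. ennreal (norm (f x)) \<partial>M1) * (\<integral>\<^sup>+y. ennreal (norm (g y)) \<partial>M2)"
    by (subst nn_integral_multc) auto
  also have "\<dots> < \<infinity>" using f g by (simp add: integrable_iff_bounded ennreal_mult_less_top)
  finally show "(\<integral>\<^sup>+z. ennreal (norm (f (fst z) * g (snd z))) \<partial>(M1 \<Otimes>\<^sub>M M2)) < \<infinity>" .
qed

lemma mult_bnd_int:
  fixes g h :: "'a \<Rightarrow> real"
  assumes "integrable M g" "h \<in> borel_measurable M" "\<And>y. \<bar>h y\<bar> \<le> B"
  shows "integrable M (\<lambda>y. h y * g y)"
proof (rule Bochner_Integration.integrable_bound[of _ "\<lambda>y. B * g y"])
  show "integrable M (\<lambda>y. B * g y)" using assms by auto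
  show "(\<lambda>y. h y * g y) \<in> borel_measurable M" using assms by auto
  have "0 \<le> B" using assms(3)[of undefined] by linarith
  then show "AE y in M. norm (h y * g y) \<le> norm (B * g y)"
    using assms(3) by (auto simp: abs_mult intro!: mult_right_mono)
qed

context six begin

definition Sm :: real where "Sm = measure lborel (Svel \<delta>)"
definition cbar :: "real \<Rightarrow> real \<Rightarrow> real" where "cbar x y = (1/Sm) * (LINT \<mu>:Svel \<delta>|lborel. Kc \<mu> x y)"
definition w :: "real \<Rightarrow> real" where "w x = indicator {xL..xR} x * sT x"
definition Dk :: "nat \<Rightarrow> (nat \<Rightarrow> real) \<Rightarrow> (nat \<Rightarrow> real) \<Rightarrow> real \<Rightarrow> real \<Rightarrow> real" where
  "Dk m t \<mu>s x y = (\<Sum>l<m. omega \<delta> t l * (Kc (\<mu>s l) x y + Kc (- \<mu>s l) x y)) - cbar x y"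

lemma Svel_sets[measurable]: "Svel \<delta> \<in> sets borel" unfolding Svel_def by auto
lemma Svel_fin: "emeasure lborel (Svel \<delta>) < \<infinity>"
proof -
  have "emeasure lborel (Svel \<delta>) \<le> emeasure lborel {-1..1::real}"
    unfolding Svel_def using d0 by (intro emeasure_mono) auto
  then show ?thesis by (simp add: le_less_trans)
qed
lemma Sm_eq: "Sm = 2 * (1 - \<delta>)"
proof -
  have "Sm = measure lborel {-1..<-\<delta>} + measure lborel {\<delta><..1}"
    unfolding Sm_def Svel_def using d0 d1 by (intro measure_Union) auto
  then show ?thesis using d1 by simp
qed
lemma Sm_pos: "0 < Sm" using Sm_eq d1 by simp

lemma Kc_S_bound: "\<mu> \<in> Svel \<delta> \<Longrightarrow> \<bar>Kc \<mu> x y\<bar> \<le> 1/\<delta>"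
proof -
  assume "\<mu> \<in> Svel \<delta>"
  then have "\<delta> \<le> \<bar>\<mu>\<bar>" unfolding Svel_def by auto
  then have "kb \<mu> \<le> 1/\<delta>" unfolding kb_def using d0 by (auto simp: field_simps)
  then show ?thesis using Kc_bound[of \<mu> x y] by linarith
qed

lemma Kc_S_int: "set_integrable lborel (Svel \<delta>) (\<lambda>\<mu>. Kc \<mu> x y)"
  by (rule bnd_set_int[where B="1/\<delta>"]) (use Svel_fin Kc_S_bound in auto)

lemma w_meas[measurable]: "w \<in> borel_measurable borel"
proof -
  have "(\<lambda>x. indicator {xL..xR} x *\<^sub>R sT x) \<in> borel_measurable borel"
    by (rule borel_measurable_continuous_on_indicator) (use cT in auto)
  then show ?thesis unfolding w_def by simp
qed
lemma w_nonneg: "0 \<le> w x" unfolding w_def using sT_pos by (auto simp: indicator_def less_imp_le)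
lemma w_int: "integrable lborel w"
proof -
  have "integrable lborel (\<lambda>x. indicator {xL..xR} x *\<^sub>R sT x)"
    by (rule borel_integrable_compact) (use cT in auto)
  then show ?thesis unfolding w_def by simp
qed

lemma cbar_meas[measurable (raw)]:
  assumes [measurable]: "f \<in> borel_measurable M" "g \<in> borel_measurable M"
  shows "(\<lambda>z. cbar (f z) (g z)) \<in> borel_measurable M"
  unfolding cbar_def set_lebesgue_integral_def by measurable

lemma cbar_bound: "\<bar>cbar x y\<bar> \<le> 1/\<delta>"
proof -
  have i: "integrable lborel (\<lambda>\<mu>. indicator (Svel \<delta>) \<mu> *\<^sub>R Kc \<mu> x y)"
    using Kc_S_int unfolding set_integrable_def .
  have "\<bar>LINT \<mu>:Svel \<delta>|lborel. Kc \<mu> x y\<bar> \<le> (\<integral>\<mu>. norm (indicator (Svel \<delta>) \<mu> *\<^sub>R Kc \<mu> x y) \<partial>lborel)"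
    unfolding set_lebesgue_integral_def using integral_norm_bound by (metis real_norm_def)
  also have "\<dots> \<le> (\<integral>\<mu>. (1/\<delta>) * indicator (Svel \<delta>) \<mu> \<partial>lborel)"
  proof (rule integral_mono)
    show "integrable lborel (\<lambda>\<mu>. norm (indicator (Svel \<delta>) \<mu> *\<^sub>R Kc \<mu> x y))" using i by auto
    have "integrable lborel (\<lambda>\<mu>. indicator (Svel \<delta>) \<mu> :: real)"
      using Svel_fin by (intro integrable_real_indicator) auto
    then show "integrable lborel (\<lambda>\<mu>. (1/\<delta>) * indicator (Svel \<delta>) \<mu>)" by auto
    show "norm (indicator (Svel \<delta>) \<mu> *\<^sub>R Kc \<mu> x y) \<le> (1/\<delta>) * indicator (Svel \<delta>) \<mu>" for \<mu>
      using Kc_S_bound[of \<mu> x y] by (auto simp: indicator_def)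
  qed
  also have "\<dots> = (1/\<delta>) * Sm" using Svel_fin unfolding Sm_def by (simp add: less_top[symmetric])
  finally show ?thesis unfolding cbar_def using Sm_pos
    by (simp add: abs_mult field_simps)
qed

lemma phi_int:
  assumes "\<phi> \<in> L2w xL xR sT"
  shows "integrable lborel (\<lambda>y. (\<phi> y)^2 * w y)" "integrable lborel (\<lambda>y. \<phi> y * w y)"
    "\<phi> \<in> borel_measurable borel"
proof -
  have m[measurable]: "\<phi> \<in> borel_measurable borel" using assms unfolding L2w_def by auto
  then show "\<phi> \<in> borel_measurable borel" .
  have "integrable lborel (\<lambda>x. indicator {xL..xR} x *\<^sub>R ((\<phi> x)^2 * sT x))"
    using assms unfolding L2w_def set_integrable_def by auto
  then show i2: "integrable lborel (\<lambda>y. (\<phi> y)^2 * w y)"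
    unfolding w_def by (simp add: mult_ac)
  show "integrable lborel (\<lambda>y. \<phi> y * w y)"
  proof (rule Bochner_Integration.integrable_bound[of _ "\<lambda>y. (\<phi> y)^2 * w y + w y"])
    show "integrable lborel (\<lambda>y. (\<phi> y)^2 * w y + w y)" using i2 w_int by auto
    show "(\<lambda>y. \<phi> y * w y) \<in> borel_measurable lborel" by measurable
    have "\<bar>\<phi> y\<bar> \<le> (\<phi> y)^2 + 1" for y
    proof (cases "\<bar>\<phi> y\<bar> \<le> 1")
      case False
      then have "\<bar>\<phi> y\<bar> * 1 \<le> \<bar>\<phi> y\<bar> * \<bar>\<phi> y\<bar>" by (intro mult_left_mono) auto
      then show ?thesis by (simp add: power2_eq_square abs_mult_self)
    qed (use zero_le_power2[of "\<phi> y"] in linarith)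
    then show "AE y in lborel. norm (\<phi> y * w y) \<le> norm ((\<phi> y)^2 * w y + w y)"
    proof (intro AE_I2)
      fix y
      have "\<bar>\<phi> y\<bar> * w y \<le> ((\<phi> y)^2 + 1) * w y"
        using w_nonneg[of y] \<open>\<And>y. \<bar>\<phi> y\<bar> \<le> (\<phi> y)^2 + 1\<close> by (intro mult_right_mono) auto
      then show "norm (\<phi> y * w y) \<le> norm ((\<phi> y)^2 * w y + w y)"
        using w_nonneg[of y] by (simp add: abs_mult distrib_right)
    qed
  qed
qed

end

context six begin

lemma Aop_eq: assumes "x \<in> {xL..xR}"
  shows "Aop xL xR sT sS \<mu> \<phi> x = (\<integral>y. Kc \<mu> x y * (\<phi> y * w y) \<partial>lborel)"
  unfolding Aop_def set_lebesgue_integral_def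
  by (intro Bochner_Integration.integral_cong) (auto simp: w_def kern_eq[OF assms] indicator_def)

lemma ind_S_int: "integrable lborel (\<lambda>\<mu>. indicator (Svel \<delta>) \<mu> :: real)"
  using Svel_fin by (intro integrable_real_indicator) auto

lemma Tavg_eq: assumes x: "x \<in> {xL..xR}" and phi: "\<phi> \<in> L2w xL xR sT"
  shows "Tavg xL xR sT sS \<delta> \<phi> x = (\<integral>y. cbar x y * (\<phi> y * w y) \<partial>lborel)"
proof -
  define g where "g y = \<phi> y * w y" for y
  have gi: "integrable lborel g" using phi_int[OF phi] unfolding g_def by auto
  have [measurable]: "g \<in> borel_measurable borel" using gi by auto
  have "(LINT \<mu>:Svel \<delta>|lborel. Aop xL xR sT sS \<mu> \<phi> x)
      = (\<integral>\<mu>. (\<integral>y. indicator (Svel \<delta>) \<mu> * Kc \<mu> x y * g y \<partial>lborel) \<partial>lborel)"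
    unfolding set_lebesgue_integral_def Aop_eq[OF x] g_def
    by (intro Bochner_Integration.integral_cong refl) (simp add: mult.assoc)
  also have "\<dots> = (\<integral>y. (\<integral>\<mu>. indicator (Svel \<delta>) \<mu> * Kc \<mu> x y * g y \<partial>lborel) \<partial>lborel)"
  proof (rule lborel_pair.Fubini_integral[symmetric])
    have "integrable (lborel \<Otimes>\<^sub>M lborel) (\<lambda>z. ((1/\<delta>) * indicator (Svel \<delta>) (fst z)) * \<bar>g (snd z)\<bar>)"
      using ind_S_int gi by (intro lborel_pair.integrable_mult_pair) auto
    then show "integrable (lborel \<Otimes>\<^sub>M lborel) (\<lambda>(\<mu>, y). indicator (Svel \<delta>) \<mu> * Kc \<mu> x y * g y)"
    proof (rule Bochner_Integration.integrable_bound)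
      show "(\<lambda>(\<mu>, y). indicator (Svel \<delta>) \<mu> * Kc \<mu> x y * g y) \<in> borel_measurable (lborel \<Otimes>\<^sub>M lborel)"
        by measurable
      show "AE z in lborel \<Otimes>\<^sub>M lborel. norm ((\<lambda>(\<mu>, y). indicator (Svel \<delta>) \<mu> * Kc \<mu> x y * g y) z)
          \<le> norm ((1/\<delta>) * indicator (Svel \<delta>) (fst z) * \<bar>g (snd z)\<bar>)"
      proof (intro AE_I2)
        fix z :: "real \<times> real"
        obtain \<mu> y where z: "z = (\<mu>, y)" by fastforce
        have "\<bar>indicator (Svel \<delta>) \<mu> * Kc \<mu> x y\<bar> \<le> (1/\<delta>) * indicator (Svel \<delta>) \<mu>"
          using Kc_S_bound[of \<mu> x y] by (auto simp: indicator_def)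
        then have "\<bar>indicator (Svel \<delta>) \<mu> * Kc \<mu> x y\<bar> * \<bar>g y\<bar> \<le> (1/\<delta>) * indicator (Svel \<delta>) \<mu> * \<bar>g y\<bar>"
          by (rule mult_right_mono) auto
        then have "\<bar>indicator (Svel \<delta>) \<mu> * Kc \<mu> x y * g y\<bar> \<le> (1/\<delta>) * indicator (Svel \<delta>) \<mu> * \<bar>g y\<bar>"
          by (simp only: abs_mult)
        then show "norm ((\<lambda>(\<mu>, y). indicator (Svel \<delta>) \<mu> * Kc \<mu> x y * g y) z)
          \<le> norm ((1/\<delta>) * indicator (Svel \<delta>) (fst z) * \<bar>g (snd z)\<bar>)"
          using z d0 by simp
      qed
    qed
  qed
  also have "\<dots> = (\<integral>y. (LINT \<mu>:Svel \<delta>|lborel. Kc \<mu> x y) * g y \<partial>lborel)"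
    unfolding set_lebesgue_integral_def
    by (intro Bochner_Integration.integral_cong refl) simp
  finally have "Tavg xL xR sT sS \<delta> \<phi> x = (1/Sm) * (\<integral>y. (LINT \<mu>:Svel \<delta>|lborel. Kc \<mu> x y) * g y \<partial>lborel)"
    unfolding Tavg_def Sm_def by simp
  also have "\<dots> = (\<integral>y. cbar x y * g y \<partial>lborel)"
    unfolding cbar_def by (simp add: mult.assoc)
  finally show ?thesis unfolding g_def .
qed

lemma Kcg_int: assumes "integrable lborel g"
  shows "integrable lborel (\<lambda>y. Kc \<mu> x y * g y)"
  using assms by (rule mult_bnd_int[where B="kb \<mu>"]) (auto intro: Kc_bound)

lemma cbarg_int: assumes "integrable lborel g"
  shows "integrable lborel (\<lambda>y. cbar x y * g y)"
  using assms by (rule mult_bnd_int[where B="1/\<delta>"]) (auto intro: cbar_bound)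

lemma dTxi_eq: assumes x: "x \<in> {xL..xR}" and phi: "\<phi> \<in> L2w xL xR sT"
  shows "dTxi xL xR sT sS \<delta> m t \<mu>s \<phi> x = (\<integral>y. Dk m t \<mu>s x y * (\<phi> y * w y) \<partial>lborel)"
proof -
  define g where "g y = \<phi> y * w y" for y
  have gi: "integrable lborel g" using phi_int[OF phi] unfolding g_def by auto
  have "(\<integral>y. Dk m t \<mu>s x y * g y \<partial>lborel) =
    (\<integral>y. (\<Sum>l<m. omega \<delta> t l * (Kc (\<mu>s l) x y * g y) + omega \<delta> t l * (Kc (- \<mu>s l) x y * g y)) - cbar x y * g y \<partial>lborel)"
    unfolding Dk_def by (intro Bochner_Integration.integral_cong refl) (simp add: sum_distrib_right sum_distrib_left algebra_simps)
  also have "\<dots> = (\<Sum>l<m. omega \<delta> t l * (\<integral>y. Kc (\<mu>s l) x y * g y \<partial>lborel) + omega \<delta> t l * (\<integral>y. Kc (- \<mu>s l) x y * g y \<partial>lborel))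
       - (\<integral>y. cbar x y * g y \<partial>lborel)"
    using Kcg_int[OF gi] cbarg_int[OF gi]
    by (subst Bochner_Integration.integral_diff) (auto simp: Bochner_Integration.integral_sum Bochner_Integration.integral_add)
  also have "\<dots> = dTxi xL xR sT sS \<delta> m t \<mu>s \<phi> x"
    unfolding dTxi_def Txi_def Tavg_eq[OF x phi] Aop_eq[OF x] g_def by (simp add: algebra_simps)
  finally show ?thesis unfolding g_def ..
qed

end

context six begin

lemma Dk_meas[measurable (raw)]:
  assumes F: "\<And>l. l < m \<Longrightarrow> (\<lambda>z. F z l) \<in> borel_measurable M"
    and [measurable]: "f \<in> borel_measurable M" "g \<in> borel_measurable M"
  shows "(\<lambda>z. Dk m t (F z) (f z) (g z)) \<in> borel_measurable M"
  unfolding Dk_def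
proof (intro borel_measurable_diff borel_measurable_sum)
  fix l assume "l \<in> {..<m}"
  then have [measurable]: "(\<lambda>z. F z l) \<in> borel_measurable M" using F by auto
  show "(\<lambda>z. omega \<delta> t l * (Kc (F z l) (f z) (g z) + Kc (- F z l) (f z) (g z))) \<in> borel_measurable M"
    by measurable
qed measurable

definition Bd :: "nat \<Rightarrow> (nat \<Rightarrow> real) \<Rightarrow> (nat \<Rightarrow> real) \<Rightarrow> real" where
  "Bd m t \<mu>s = (\<Sum>l<m. \<bar>omega \<delta> t l\<bar> * (kb (\<mu>s l) + kb (- \<mu>s l))) + 1/\<delta>"

lemma Dk_bound: "\<bar>Dk m t \<mu>s x y\<bar> \<le> Bd m t \<mu>s"
proof -
  have "\<bar>\<Sum>l<m. omega \<delta> t l * (Kc (\<mu>s l) x y + Kc (- \<mu>s l) x y)\<bar>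
      \<le> (\<Sum>l<m. \<bar>omega \<delta> t l * (Kc (\<mu>s l) x y + Kc (- \<mu>s l) x y)\<bar>)" by (rule sum_abs)
  also have "\<dots> \<le> (\<Sum>l<m. \<bar>omega \<delta> t l\<bar> * (kb (\<mu>s l) + kb (- \<mu>s l)))"
  proof (intro sum_mono)
    fix l
    have "\<bar>Kc (\<mu>s l) x y + Kc (- \<mu>s l) x y\<bar> \<le> kb (\<mu>s l) + kb (- \<mu>s l)"
      using Kc_bound[of "\<mu>s l" x y] Kc_bound[of "- \<mu>s l" x y] by linarith
    then show "\<bar>omega \<delta> t l * (Kc (\<mu>s l) x y + Kc (- \<mu>s l) x y)\<bar> \<le> \<bar>omega \<delta> t l\<bar> * (kb (\<mu>s l) + kb (- \<mu>s l))"
      by (simp add: abs_mult mult_left_mono)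
  qed
  finally show ?thesis unfolding Dk_def Bd_def using cbar_bound[of x y] by linarith
qed

definition NN :: "nat \<Rightarrow> (nat \<Rightarrow> real) \<Rightarrow> (nat \<Rightarrow> real) \<Rightarrow> ennreal" where
  "NN m t \<mu>s = (\<integral>\<^sup>+x. \<integral>\<^sup>+y. ennreal (w x * w y * (Dk m t \<mu>s x y)^2) \<partial>lborel \<partial>lborel)"

lemma stepA: "(opnorm xL xR sT (dTxi xL xR sT sS \<delta> m t \<mu>s))^2 \<le> NN m t \<mu>s"
proof -
  define D where "D x y = Dk m t \<mu>s x y" for x y
  define B where "B = Bd m t \<mu>s"
  have Dm[measurable]: "(\<lambda>(x,y). D x y) \<in> borel_measurable (lborel \<Otimes>\<^sub>M lborel)"
    unfolding D_def by measurable
  have Dm1[measurable]: "D x \<in> borel_measurable lborel" for x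
    unfolding D_def by measurable
  have Db: "\<bar>D x y\<bar> \<le> B" for x y unfolding D_def B_def by (rule Dk_bound)
  have B0: "0 \<le> B" using Db[of 0 0] by linarith
  have D2b: "\<bar>(D x y)^2\<bar> \<le> B^2" for x y
    using power_mono[OF Db[of x y], of 2] by simp
  define Q where "Q x = (\<integral>y. (D x y)^2 * w y \<partial>lborel)" for x
  have Qm[measurable]: "Q \<in> borel_measurable lborel" unfolding Q_def by measurable
  have Dwi: "integrable lborel (\<lambda>y. (D x y)^2 * w y)" for x
    using w_int by (rule mult_bnd_int[where B="B^2"]) (use D2b in auto)
  have Q0: "0 \<le> Q x" for x unfolding Q_def using w_nonneg by (intro Bochner_Integration.integral_nonneg) auto
  have Qb: "\<bar>Q x\<bar> \<le> B^2 * (\<integral>y. w y \<partial>lborel)" for x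
  proof -
    have "Q x \<le> (\<integral>y. B^2 * w y \<partial>lborel)" unfolding Q_def
      using Dwi w_int D2b w_nonneg by (intro integral_mono) (auto intro!: mult_right_mono)
    then show ?thesis using Q0[of x] by simp
  qed
  have Qwi: "integrable lborel (\<lambda>x. Q x * w x)"
    using w_int by (rule mult_bnd_int) (use Qb in auto)
  define R where "R = (\<integral>x. Q x * w x \<partial>lborel)"
  have R0: "0 \<le> R" unfolding R_def using Q0 w_nonneg by (intro Bochner_Integration.integral_nonneg) auto
  have main: "wnorm xL xR sT (dTxi xL xR sT sS \<delta> m t \<mu>s \<phi>) \<le> sqrt R"
    if phi: "\<phi> \<in> L2w xL xR sT" "wnorm xL xR sT \<phi> \<le> 1" for \<phi>
  proof -
    define u where "u x = dTxi xL xR sT sS \<delta> m t \<mu>s \<phi> x" for x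
    have pi: "integrable lborel (\<lambda>y. (\<phi> y)^2 * w y)" "integrable lborel (\<lambda>y. \<phi> y * w y)"
      using phi_int[OF phi(1)] by auto
    have "(LINT x:{xL..xR}|lborel. (\<phi> x)^2 * sT x) = (\<integral>x. (\<phi> x)^2 * w x \<partial>lborel)"
      unfolding set_lebesgue_integral_def w_def by (intro Bochner_Integration.integral_cong) auto
    then have pn: "(\<integral>x. (\<phi> x)^2 * w x \<partial>lborel) \<le> 1"
      using phi(2) unfolding wnorm_def by (metis real_sqrt_le_1_iff)
    have pn0: "0 \<le> (\<integral>x. (\<phi> x)^2 * w x \<partial>lborel)" using w_nonneg by (intro Bochner_Integration.integral_nonneg) auto
    have pt: "(u x)^2 \<le> Q x" if x: "x \<in> {xL..xR}" for x
    proof -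
      have "u x = (\<integral>y. D x y * \<phi> y * w y \<partial>lborel)"
        unfolding u_def dTxi_eq[OF x phi(1)] D_def by (simp add: mult.assoc)
      then have "(u x)^2 \<le> (\<integral>y. (D x y)^2 * w y \<partial>lborel) * (\<integral>y. (\<phi> y)^2 * w y \<partial>lborel)"
      proof (simp only:, intro weighted_cs)
        show "integrable lborel (\<lambda>y. (D x y)^2 * w y)" by (rule Dwi)
        show "integrable lborel (\<lambda>y. (\<phi> y)^2 * w y)" by (rule pi(1))
        show "integrable lborel (\<lambda>y. D x y * \<phi> y * w y)"
          using mult_bnd_int[OF pi(2), of "D x" B] Db by (simp add: mult.assoc)
      qed (rule w_nonneg)
      also have "\<dots> \<le> Q x * 1" unfolding Q_def[symmetric]
        using Q0 pn pn0 by (intro mult_left_mono) auto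
      finally show ?thesis by simp
    qed
    have "(LINT x:{xL..xR}|lborel. (u x)^2 * sT x) = (\<integral>x. (u x)^2 * w x \<partial>lborel)"
      unfolding set_lebesgue_integral_def w_def by (intro Bochner_Integration.integral_cong) auto
    also have "\<dots> \<le> R"
    proof (cases "integrable lborel (\<lambda>x. (u x)^2 * w x)")
      case True
      show ?thesis unfolding R_def
      proof (rule integral_mono[OF True Qwi])
        fix x show "(u x)^2 * w x \<le> Q x * w x"
          using pt[of x] w_nonneg[of x] by (cases "x \<in> {xL..xR}") (auto simp: w_def intro: mult_right_mono)
      qed
    next
      case False then show ?thesis using R0 by (simp add: not_integrable_integral_eq)
    qed
    finally show ?thesis unfolding wnorm_def u_def by (rule real_sqrt_le_mono)
  qed
  have "opnorm xL xR sT (dTxi xL xR sT sS \<delta> m t \<mu>s) \<le> ennreal (sqrt R)"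
    unfolding opnorm_def using main by (intro SUP_least) (auto intro: ennreal_leI)
  then have "(opnorm xL xR sT (dTxi xL xR sT sS \<delta> m t \<mu>s))^2 \<le> (ennreal (sqrt R))^2"
    by (intro power_mono) auto
  also have "\<dots> = ennreal R" using R0 by (simp add: ennreal_power)
  also have "ennreal R = (\<integral>\<^sup>+x. ennreal (Q x * w x) \<partial>lborel)"
    unfolding R_def using Qwi Q0 w_nonneg
    by (intro nn_integral_eq_integral[symmetric]) auto
  also have "\<dots> = NN m t \<mu>s"
    unfolding NN_def
  proof (intro nn_integral_cong)
    fix x
    have "ennreal (Q x * w x) = ennreal (\<integral>y. w x * w y * (D x y)^2 \<partial>lborel)"
    proof -
      have "Q x * w x = (\<integral>y. w x * ((D x y)^2 * w y) \<partial>lborel)" unfolding Q_def by simp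
      also have "\<dots> = (\<integral>y. w x * w y * (D x y)^2 \<partial>lborel)"
        by (intro Bochner_Integration.integral_cong) (auto simp: mult_ac)
      finally show ?thesis by simp
    qed
    also have "\<dots> = (\<integral>\<^sup>+y. ennreal (w x * w y * (D x y)^2) \<partial>lborel)"
    proof (intro nn_integral_eq_integral[symmetric])
      have "integrable lborel (\<lambda>y. w x * ((D x y)^2 * w y))" using Dwi[of x] by simp
      then show "integrable lborel (\<lambda>y. w x * w y * (D x y)^2)" by (simp add: mult_ac)
    qed (use w_nonneg in auto)
    finally show "ennreal (Q x * w x) = (\<integral>\<^sup>+y. ennreal (w x * w y * (Dk m t \<mu>s x y)^2) \<partial>lborel)"
      unfolding D_def .
  qed
  finally show ?thesis .
qed

end


locale sixp = six +
  fixes m :: nat and t :: "nat \<Rightarrow> real"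
  assumes m1: "1 \<le> m" and t0: "t 0 = -1" and tm: "t m = -\<delta>" and tinc: "\<forall>l<m. t l < t (Suc l)"
begin

lemma t_mono: "i \<le> j \<Longrightarrow> j \<le> m \<Longrightarrow> t i \<le> t j"
proof (induction j)
  case 0 then show ?case by simp
next
  case (Suc j)
  show ?case
  proof (cases "i = Suc j")
    case False
    then have "t i \<le> t j" using Suc by auto
    also have "t j \<le> t (Suc j)" using tinc Suc by (auto intro: less_imp_le)
    finally show ?thesis .
  qed simp
qed

lemma t_range: "k \<le> m \<Longrightarrow> -1 \<le> t k \<and> t k \<le> -\<delta>"
  using t_mono[of 0 k] t_mono[of k m] t0 tm by auto

definition Sl :: "nat \<Rightarrow> real set" where "Sl l = {t l..<t (Suc l)}"
definition len :: "nat \<Rightarrow> real" where "len l = t (Suc l) - t l"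

lemma len_pos: "l < m \<Longrightarrow> 0 < len l" unfolding len_def using tinc by auto

lemma Sl_sub: "l < m \<Longrightarrow> Sl l \<subseteq> {-1..-\<delta>}"
  unfolding Sl_def using t_range[of l] t_range[of "Suc l"] by auto

lemma Kc_neg_bound: "\<mu> \<in> {-1..-\<delta>} \<Longrightarrow> \<bar>Kc \<mu> x y\<bar> \<le> 1/\<delta> \<and> \<bar>Kc (-\<mu>) x y\<bar> \<le> 1/\<delta>"
proof -
  assume a: "\<mu> \<in> {-1..-\<delta>}"
  then have "kb \<mu> \<le> 1/\<delta>" "kb (-\<mu>) \<le> 1/\<delta>" unfolding kb_def using d0 by (auto simp: field_simps)
  then show ?thesis using Kc_bound[of \<mu> x y] Kc_bound[of "-\<mu>" x y] by linarith
qed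

lemma H_meas[measurable]: "H x y \<in> borel_measurable borel" unfolding H_def by measurable

lemma neg_int: assumes "A \<in> sets borel" "A \<subseteq> {-1..-\<delta>}"
  shows "set_integrable lborel A (\<lambda>\<mu>. Kc \<mu> x y)" "set_integrable lborel A (\<lambda>\<mu>. Kc (-\<mu>) x y)"
    "set_integrable lborel A (H x y)"
proof -
  have "emeasure lborel A \<le> emeasure lborel {-1..-\<delta>}" by (rule emeasure_mono) (use assms in auto)
  then have fin: "emeasure lborel A < \<infinity>" using d1 by (simp add: le_less_trans)
  show "set_integrable lborel A (\<lambda>\<mu>. Kc \<mu> x y)"
    by (rule bnd_set_int[where B="1/\<delta>"]) (use assms fin Kc_neg_bound in auto)
  show "set_integrable lborel A (\<lambda>\<mu>. Kc (-\<mu>) x y)"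
    by (rule bnd_set_int[where B="1/\<delta>"]) (use assms fin Kc_neg_bound in auto)
  show "set_integrable lborel A (H x y)"
  proof (rule bnd_set_int[where B="2/\<delta>"])
    fix \<mu> assume "\<mu> \<in> A"
    then have "\<mu> \<in> {-1..-\<delta>}" using assms by auto
    then show "\<bar>H x y \<mu>\<bar> \<le> 2/\<delta>" using Kc_neg_bound[of \<mu> x y] unfolding H_def by auto
  qed (use assms fin in auto)
qed

lemma split_pieces: fixes g :: "real \<Rightarrow> real" assumes "k \<le> m" "set_integrable lborel {-1..<-\<delta>} g"
  shows "(LINT \<mu>:{t 0..<t k}|lborel. g \<mu>) = (\<Sum>l<k. LINT \<mu>:Sl l|lborel. g \<mu>)"
  using assms(1)
proof (induction k)
  case 0 then show ?case by (simp add: set_lebesgue_integral_def)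
next
  case (Suc k)
  have r: "-1 \<le> t 0" "t k \<le> t (Suc k)" "t 0 \<le> t k" "t (Suc k) \<le> -\<delta>"
    using t_range[of 0] t_range[of "Suc k"] t_mono[of k "Suc k"] t_mono[of 0 k] Suc by auto
  have "{t 0..<t (Suc k)} = {t 0..<t k} \<union> Sl k" unfolding Sl_def using r by auto
  then have "(LINT \<mu>:{t 0..<t (Suc k)}|lborel. g \<mu>) = (LINT \<mu>:{t 0..<t k}|lborel. g \<mu>) + (LINT \<mu>:Sl k|lborel. g \<mu>)"
    using r by (simp, intro set_integral_Un set_integrable_subset[OF assms(2)]) (auto simp: Sl_def)
  then show ?case using Suc by simp
qed

lemma reflect: fixes f :: "real \<Rightarrow> real" shows "(LINT \<mu>:{\<delta><..1}|lborel. f \<mu>) = (LINT \<mu>:{-1..<-\<delta>}|lborel. f (-\<mu>))"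
proof -
  have "(LINT \<mu>:{\<delta><..1}|lborel. f \<mu>) = \<bar>-1\<bar> *\<^sub>R (\<integral>\<mu>. indicator {\<delta><..1} (0 + -1*\<mu>) *\<^sub>R f (0 + -1*\<mu>) \<partial>lborel)"
    unfolding set_lebesgue_integral_def by (rule lborel_integral_real_affine[where c="-1" and t=0]) simp
  also have "\<dots> = (LINT \<mu>:{-1..<-\<delta>}|lborel. f (-\<mu>))"
    unfolding set_lebesgue_integral_def
    by (simp, intro Bochner_Integration.integral_cong) (auto simp: indicator_def)
  finally show ?thesis .
qed

lemma S_decomp: "(LINT \<mu>:Svel \<delta>|lborel. Kc \<mu> x y) = (\<Sum>l<m. LINT \<mu>:Sl l|lborel. H x y \<mu>)"
proof -
  have i1: "set_integrable lborel {-1..<-\<delta>} (\<lambda>\<mu>. Kc \<mu> x y)"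
    "set_integrable lborel {-1..<-\<delta>} (\<lambda>\<mu>. Kc (-\<mu>) x y)"
  proof -
    have "{-1..<-\<delta>} \<subseteq> {-1..-\<delta>}" by auto
    then show "set_integrable lborel {-1..<-\<delta>} (\<lambda>\<mu>. Kc \<mu> x y)"
      "set_integrable lborel {-1..<-\<delta>} (\<lambda>\<mu>. Kc (-\<mu>) x y)"
      using neg_int[of "{-1..<-\<delta>}" x y] by auto
  qed
  have "(LINT \<mu>:Svel \<delta>|lborel. Kc \<mu> x y) = (LINT \<mu>:{-1..<-\<delta>}|lborel. Kc \<mu> x y) + (LINT \<mu>:{\<delta><..1}|lborel. Kc \<mu> x y)"
    unfolding Svel_def using d0
    by (intro set_integral_Un set_integrable_subset[OF Kc_S_int]) (auto simp: Svel_def)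
  also have "(LINT \<mu>:{\<delta><..1}|lborel. Kc \<mu> x y) = (LINT \<mu>:{-1..<-\<delta>}|lborel. Kc (-\<mu>) x y)"
    by (rule reflect)
  also have "(LINT \<mu>:{-1..<-\<delta>}|lborel. Kc \<mu> x y) = (\<Sum>l<m. LINT \<mu>:Sl l|lborel. Kc \<mu> x y)"
    using split_pieces[OF order.refl i1(1)] t0 tm by simp
  also have "(LINT \<mu>:{-1..<-\<delta>}|lborel. Kc (-\<mu>) x y) = (\<Sum>l<m. LINT \<mu>:Sl l|lborel. Kc (-\<mu>) x y)"
    using split_pieces[OF order.refl i1(2)] t0 tm by simp
  also have "(\<Sum>l<m. LINT \<mu>:Sl l|lborel. Kc \<mu> x y) + (\<Sum>l<m. LINT \<mu>:Sl l|lborel. Kc (-\<mu>) x y)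
      = (\<Sum>l<m. LINT \<mu>:Sl l|lborel. H x y \<mu>)"
    unfolding sum.distrib[symmetric] H_def
  proof (intro sum.cong refl set_integral_add(2)[symmetric])
    fix l assume "l \<in> {..<m}"
    then have "Sl l \<subseteq> {-1..-\<delta>}" "Sl l \<in> sets borel" using Sl_sub by (auto simp: Sl_def)
    then show "set_integrable lborel (Sl l) (\<lambda>\<mu>. Kc \<mu> x y)" "set_integrable lborel (Sl l) (\<lambda>\<mu>. Kc (-\<mu>) x y)"
      using neg_int by auto
  qed
  finally show ?thesis .
qed

definition Aavg :: "real \<Rightarrow> real \<Rightarrow> nat \<Rightarrow> real" where
  "Aavg x y l = (1/len l) * (LINT \<mu>:Sl l|lborel. H x y \<mu>)"

lemma omega_eq: "omega \<delta> t l = len l / Sm" unfolding omega_def len_def Sm_def by simp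

lemma Dk_decomp: "Dk m t \<mu>s x y = (\<Sum>l<m. omega \<delta> t l * (H x y (\<mu>s l) - Aavg x y l))"
proof -
  have "cbar x y = (\<Sum>l<m. omega \<delta> t l * Aavg x y l)"
    unfolding cbar_def S_decomp sum_distrib_left
  proof (intro sum.cong refl)
    fix l assume "l \<in> {..<m}"
    then have "len l \<noteq> 0" using len_pos by force
    then show "1 / Sm * (LINT \<mu>:Sl l|lborel. H x y \<mu>) = omega \<delta> t l * Aavg x y l"
      by (simp add: omega_eq Aavg_def)
  qed
  then show ?thesis unfolding Dk_def H_def by (simp add: sum_subtractf right_diff_distrib)
qed

end

context sixp begin

definition Mp :: "nat \<Rightarrow> real measure" where
  "Mp i = (if i < m then uniform_measure lborel (Sl i) else uniform_measure lborel {0..<1})"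

lemma prob_Mp: "prob_space (Mp i)"
proof (cases "i < m")
  case True
  then have "t i < t (Suc i)" using tinc by auto
  then show ?thesis unfolding Mp_def Sl_def using True
    by (auto intro!: prob_space_uniform_measure)
qed (auto simp: Mp_def intro!: prob_space_uniform_measure)

lemma fm_Mp: "finite_measure (Mp i)" using prob_Mp[of i] by (simp add: prob_space_def)

lemma law_eq: "ordinate_law m t = PiM {..<m} Mp"
  unfolding ordinate_law_def by (intro PiM_cong) (auto simp: Mp_def Sl_def)

lemma sets_Mp[simp]: "sets (Mp i) = sets borel" unfolding Mp_def by auto

definition Ytil :: "real \<Rightarrow> real \<Rightarrow> nat \<Rightarrow> real \<Rightarrow> real" where
  "Ytil x y l \<mu> = indicator (Sl l) \<mu> * (H x y \<mu> - Aavg x y l)"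
definition bl :: "nat \<Rightarrow> real" where "bl l = 2 * LL * len l"

lemma Sl_sets[measurable]: "Sl l \<in> sets borel" unfolding Sl_def by auto

lemma Ytil_meas[measurable]: "Ytil x y l \<in> borel_measurable borel"
  unfolding Ytil_def by measurable

lemma Sl_meas: "l < m \<Longrightarrow> measure lborel (Sl l) = len l"
  unfolding Sl_def len_def using tinc by auto

lemma H_ind_int: "l < m \<Longrightarrow> integrable lborel (\<lambda>\<mu>. indicator (Sl l) \<mu> * H x y \<mu>)"
  using neg_int(3)[of "Sl l" x y] Sl_sub[of l] unfolding set_integrable_def by auto

lemma ind_int: "l < m \<Longrightarrow> integrable lborel (\<lambda>\<mu>. indicator (Sl l) \<mu> :: real)"
  using tinc by (intro integrable_real_indicator) (auto simp: Sl_def)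

lemma Ytil_bound: assumes l: "l < m" shows "\<bar>Ytil x y l \<mu>\<bar> \<le> bl l"
proof (cases "\<mu> \<in> Sl l")
  case False then show ?thesis unfolding Ytil_def bl_def using LL_nonneg len_pos[OF l] by auto
next
  case True
  have lp: "0 < len l" using len_pos[OF l] .
  have int1: "integrable lborel (\<lambda>\<mu>'. indicator (Sl l) \<mu>' * H x y \<mu>)"
    using ind_int[OF l] by auto
  have "(\<integral>\<mu>'. indicator (Sl l) \<mu>' * H x y \<mu> \<partial>lborel) = len l * H x y \<mu>"
    using Sl_meas[OF l] by simp
  moreover have "(LINT \<mu>:Sl l|lborel. H x y \<mu>) = (\<integral>\<mu>'. indicator (Sl l) \<mu>' * H x y \<mu>' \<partial>lborel)"
    unfolding set_lebesgue_integral_def by simp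
  ultimately have e2: "(\<integral>\<mu>'. indicator (Sl l) \<mu>' * (H x y \<mu> - H x y \<mu>') \<partial>lborel)
      = len l * H x y \<mu> - (LINT \<mu>:Sl l|lborel. H x y \<mu>)"
    using int1 H_ind_int[OF l] by (simp add: right_diff_distrib Bochner_Integration.integral_diff)
  have "H x y \<mu> - Aavg x y l = (1/len l) * (\<integral>\<mu>'. indicator (Sl l) \<mu>' * (H x y \<mu> - H x y \<mu>') \<partial>lborel)"
    unfolding e2 Aavg_def using lp by (simp add: field_simps)
  moreover have "\<bar>\<integral>\<mu>'. indicator (Sl l) \<mu>' * (H x y \<mu> - H x y \<mu>') \<partial>lborel\<bar> \<le> bl l * len l"
  proof -
    have "\<bar>\<integral>\<mu>'. indicator (Sl l) \<mu>' * (H x y \<mu> - H x y \<mu>') \<partial>lborel\<bar>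
        \<le> (\<integral>\<mu>'. norm (indicator (Sl l) \<mu>' * (H x y \<mu> - H x y \<mu>')) \<partial>lborel)"
      using integral_norm_bound by (metis real_norm_def)
    also have "\<dots> \<le> (\<integral>\<mu>'. bl l * indicator (Sl l) \<mu>' \<partial>lborel)"
    proof (rule integral_mono)
      have "integrable lborel (\<lambda>\<mu>'. indicator (Sl l) \<mu>' * H x y \<mu> - indicator (Sl l) \<mu>' * H x y \<mu>')"
        using int1 H_ind_int[OF l] by auto
      then show "integrable lborel (\<lambda>\<mu>'. norm (indicator (Sl l) \<mu>' * (H x y \<mu> - H x y \<mu>')))"
        by (simp add: right_diff_distrib)
      show "integrable lborel (\<lambda>\<mu>'. bl l * indicator (Sl l) \<mu>')" using ind_int[OF l] by auto
      fix \<mu>'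
      show "norm (indicator (Sl l) \<mu>' * (H x y \<mu> - H x y \<mu>')) \<le> bl l * indicator (Sl l) \<mu>'"
      proof (cases "\<mu>' \<in> Sl l")
        case True2: True
        have "\<bar>\<mu> - \<mu>'\<bar> \<le> len l" using True True2 unfolding Sl_def len_def by auto
        moreover have "\<bar>H x y \<mu> - H x y \<mu>'\<bar> \<le> 2 * LL * \<bar>\<mu> - \<mu>'\<bar>"
        proof (rule H_lip)
          show "\<mu> \<le> -\<delta>" "\<mu>' \<le> -\<delta>" using True True2 Sl_sub[OF l] by force+
        qed
        ultimately have "\<bar>H x y \<mu> - H x y \<mu>'\<bar> \<le> 2 * LL * len l"
          using LL_nonneg by (smt (verit) mult_left_mono)
        then show ?thesis using True2 unfolding bl_def by auto
      qed simp
    qed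
    also have "\<dots> = bl l * len l" using Sl_meas[OF l] by simp
    finally show ?thesis .
  qed
  ultimately have "\<bar>H x y \<mu> - Aavg x y l\<bar> \<le> (1/len l) * (bl l * len l)"
    using lp by (simp add: abs_mult pos_divide_le_eq)
  then show ?thesis unfolding Ytil_def using True lp by simp
qed

lemma Ytil_mean: assumes l: "l < m" shows "(\<integral>\<mu>. Ytil x y l \<mu> \<partial>Mp l) = 0"
proof -
  have "(\<integral>\<mu>. Ytil x y l \<mu> \<partial>Mp l) = (\<integral>\<mu>. indicator (Sl l) \<mu> * Ytil x y l \<mu> \<partial>lborel) / len l"
    unfolding Mp_def Sl_def len_def using l tinc by (simp add: integral_uniform_Ico)
  also have "(\<integral>\<mu>. indicator (Sl l) \<mu> * Ytil x y l \<mu> \<partial>lborel)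
      = (\<integral>\<mu>. indicator (Sl l) \<mu> * H x y \<mu> - Aavg x y l * indicator (Sl l) \<mu> \<partial>lborel)"
    unfolding Ytil_def by (intro Bochner_Integration.integral_cong) (auto simp: indicator_def)
  also have "\<dots> = (LINT \<mu>:Sl l|lborel. H x y \<mu>) - Aavg x y l * len l"
    using H_ind_int[OF l] ind_int[OF l] Sl_meas[OF l]
    by (simp add: set_lebesgue_integral_def)
  also have "\<dots> = 0" unfolding Aavg_def using len_pos[OF l] by simp
  finally show ?thesis by simp
qed

end

context sixp begin

lemma PP: "product_prob_space Mp" by (rule product_prob_spaceI) (rule prob_Mp)

lemma Ytil_meas_Mp: "Ytil x y l \<in> borel_measurable (Mp i)"
  by (subst measurable_cong_sets[OF sets_Mp refl]) (rule Ytil_meas)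

lemma Y_meas: "l < m \<Longrightarrow> (\<lambda>\<mu>s. Ytil x y l (\<mu>s l)) \<in> borel_measurable (PiM {..<m} Mp)"
proof -
  assume l: "l < m"
  have "(\<lambda>\<mu>s. \<mu>s l) \<in> measurable (PiM {..<m} Mp) (Mp l)"
    by (rule measurable_component_singleton) (use l in auto)
  from measurable_compose[OF this Ytil_meas_Mp[of x y l l]] show ?thesis .
qed

lemma Y_int_Mp: "l < m \<Longrightarrow> integrable (Mp i) (Ytil x y l)"
proof -
  assume l: "l < m"
  interpret finite_measure "Mp i" by (rule fm_Mp)
  show ?thesis
    by (rule integrable_const_bound[where B="bl l"]) (use Ytil_bound[OF l] Ytil_meas_Mp in auto)
qed

lemma cross: assumes l: "l < m" "l' < m" "l \<noteq> l'"
  shows "(\<integral>\<mu>s. Ytil x y l (\<mu>s l) * Ytil x y l' (\<mu>s l') \<partial>PiM {..<m} Mp) = 0"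
proof -
  interpret product_sigma_finite Mp using PP by (simp add: product_prob_space_def)
  define f where "f i = (if i = l then Ytil x y l else if i = l' then Ytil x y l' else (\<lambda>_. 1))" for i
  have fi: "integrable (Mp i) (f i)" if "i \<in> {..<m}" for i
  proof -
    interpret finite_measure "Mp i" by (rule fm_Mp)
    show ?thesis unfolding f_def using Y_int_Mp l by auto
  qed
  have pe: "(\<Prod>i\<in>{..<m}. f i (\<mu>s i)) = Ytil x y l (\<mu>s l) * Ytil x y l' (\<mu>s l')" for \<mu>s
  proof -
    have "(\<Prod>i\<in>{..<m}. f i (\<mu>s i)) = f l (\<mu>s l) * (\<Prod>i\<in>{..<m}-{l}. f i (\<mu>s i))"
      using l by (intro prod.remove) auto
    also have "(\<Prod>i\<in>{..<m}-{l}. f i (\<mu>s i)) = f l' (\<mu>s l') * (\<Prod>i\<in>{..<m}-{l}-{l'}. f i (\<mu>s i))"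
      using l by (intro prod.remove) auto
    also have "(\<Prod>i\<in>{..<m}-{l}-{l'}. f i (\<mu>s i)) = 1"
      by (intro prod.neutral) (auto simp: f_def)
    finally show ?thesis using l by (simp add: f_def)
  qed
  have "(\<integral>\<mu>s. (\<Prod>i\<in>{..<m}. f i (\<mu>s i)) \<partial>PiM {..<m} Mp) = (\<Prod>i\<in>{..<m}. integral\<^sup>L (Mp i) (f i))"
    by (rule product_integral_prod) (use fi in auto)
  also have "\<dots> = 0"
    using l by (intro prod_zero) (auto simp: f_def Ytil_mean intro!: bexI[of _ l])
  finally show ?thesis unfolding pe .
qed

lemma diag: assumes l: "l < m"
  shows "(\<integral>\<mu>s. Ytil x y l (\<mu>s l) * Ytil x y l (\<mu>s l) \<partial>PiM {..<m} Mp) \<le> (bl l)^2"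
proof -
  interpret prob_space "PiM {..<m} Mp" by (rule prob_space_PiM) (rule prob_Mp)
  have b: "\<bar>Ytil x y l (\<mu>s l) * Ytil x y l (\<mu>s l)\<bar> \<le> (bl l)^2" for \<mu>s
  proof -
    have "\<bar>Ytil x y l (\<mu>s l)\<bar> * \<bar>Ytil x y l (\<mu>s l)\<bar> \<le> bl l * bl l"
      using Ytil_bound[OF l, of x y "\<mu>s l"] by (intro mult_mono) auto
    then show ?thesis by (simp add: abs_mult power2_eq_square)
  qed
  have "(\<integral>\<mu>s. Ytil x y l (\<mu>s l) * Ytil x y l (\<mu>s l) \<partial>PiM {..<m} Mp) \<le> (\<integral>\<mu>s. (bl l)^2 \<partial>PiM {..<m} Mp)"
  proof (rule integral_mono)
    show "integrable (PiM {..<m} Mp) (\<lambda>\<mu>s. Ytil x y l (\<mu>s l) * Ytil x y l (\<mu>s l))"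
      by (rule integrable_const_bound[where B="(bl l)^2"]) (use b Y_meas[OF l] in auto)
    show "Ytil x y l (\<mu>s l) * Ytil x y l (\<mu>s l) \<le> (bl l)^2" for \<mu>s using b[of \<mu>s] by linarith
  qed auto
  then show ?thesis by (simp add: prob_space)
qed

lemma stepC: "(\<integral>\<^sup>+\<mu>s. ennreal ((Dk m t \<mu>s x y)^2) \<partial>ordinate_law m t)
   \<le> ennreal (\<Sum>l<m. (omega \<delta> t l)^2 * (bl l)^2)"
proof -
  let ?P = "PiM {..<m} Mp"
  interpret prob_space ?P by (rule prob_space_PiM) (rule prob_Mp)
  define Y where "Y l \<mu>s = Ytil x y l (\<mu>s l)" for l \<mu>s
  define Z where "Z \<mu>s = (\<Sum>l<m. omega \<delta> t l * Y l \<mu>s)" for \<mu>s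
  have Ym[measurable]: "l < m \<Longrightarrow> Y l \<in> borel_measurable ?P" for l unfolding Y_def by (rule Y_meas)
  have Yb: "l < m \<Longrightarrow> \<bar>Y l \<mu>s\<bar> \<le> bl l" for l \<mu>s unfolding Y_def by (rule Ytil_bound)
  have YYint: "integrable ?P (\<lambda>\<mu>s. c * (Y l \<mu>s * Y l' \<mu>s))" if "l < m" "l' < m" for l l' c
  proof -
    have "integrable ?P (\<lambda>\<mu>s. Y l \<mu>s * Y l' \<mu>s)"
    proof (rule integrable_const_bound[where B="bl l * bl l'"])
      show "AE \<mu>s in ?P. norm (Y l \<mu>s * Y l' \<mu>s) \<le> bl l * bl l'"
        using Yb that by (auto simp: abs_mult intro!: mult_mono')
      show "(\<lambda>\<mu>s. Y l \<mu>s * Y l' \<mu>s) \<in> borel_measurable ?P" using Ym that by auto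
    qed
    then show ?thesis by auto
  qed
  have Zm: "Z \<in> borel_measurable ?P" unfolding Z_def using Ym by (intro borel_measurable_sum) auto
  have AEgood: "AE \<mu>s in ?P. \<forall>l\<in>{..<m}. \<mu>s l \<in> Sl l"
  proof (rule AE_finite_allI)
    fix l assume l: "l \<in> {..<m}"
    have "AE \<mu> in Mp l. \<mu> \<in> Sl l"
      unfolding Mp_def using l by (auto intro!: AE_uniform_measureI)
    then show "AE \<mu>s in ?P. \<mu>s l \<in> Sl l"
      using AE_PiM_component[where P="\<lambda>\<mu>. \<mu> \<in> Sl l" and I="{..<m}" and M=Mp and i=l] prob_Mp l
      by auto
  qed simp
  have "(\<integral>\<^sup>+\<mu>s. ennreal ((Dk m t \<mu>s x y)^2) \<partial>ordinate_law m t) = (\<integral>\<^sup>+\<mu>s. ennreal ((Z \<mu>s)^2) \<partial>?P)"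
    unfolding law_eq
  proof (rule nn_integral_cong_AE)
    show "AE \<mu>s in ?P. ennreal ((Dk m t \<mu>s x y)^2) = ennreal ((Z \<mu>s)^2)"
      using AEgood
    proof (rule AE_mp, intro AE_I2 impI)
      fix \<mu>s assume g: "\<forall>l\<in>{..<m}. \<mu>s l \<in> Sl l"
      have "Dk m t \<mu>s x y = Z \<mu>s" unfolding Dk_decomp Z_def Y_def Ytil_def
        using g by (intro sum.cong refl) auto
      then show "ennreal ((Dk m t \<mu>s x y)^2) = ennreal ((Z \<mu>s)^2)" by simp
    qed
  qed
  also have "\<dots> = ennreal (\<integral>\<mu>s. (Z \<mu>s)^2 \<partial>?P)"
  proof (rule nn_integral_eq_integral)
    have "integrable ?P (\<lambda>\<mu>s. \<Sum>l<m. \<Sum>l'<m. omega \<delta> t l * omega \<delta> t l' * (Y l \<mu>s * Y l' \<mu>s))"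
      using YYint by (intro Bochner_Integration.integrable_sum) auto
    moreover have "(Z \<mu>s)^2 = (\<Sum>l<m. \<Sum>l'<m. omega \<delta> t l * omega \<delta> t l' * (Y l \<mu>s * Y l' \<mu>s))" for \<mu>s
      unfolding Z_def power2_eq_square sum_product by (intro sum.cong refl) (simp add: mult_ac)
    ultimately show "integrable ?P (\<lambda>\<mu>s. (Z \<mu>s)^2)" by simp
  qed auto
  also have "(\<integral>\<mu>s. (Z \<mu>s)^2 \<partial>?P) = (\<Sum>l<m. \<Sum>l'<m. omega \<delta> t l * omega \<delta> t l' * (\<integral>\<mu>s. Y l \<mu>s * Y l' \<mu>s \<partial>?P))"
  proof -
    have "(\<integral>\<mu>s. (Z \<mu>s)^2 \<partial>?P) = (\<integral>\<mu>s. (\<Sum>l<m. \<Sum>l'<m. omega \<delta> t l * omega \<delta> t l' * (Y l \<mu>s * Y l' \<mu>s)) \<partial>?P)"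
      unfolding Z_def power2_eq_square sum_product
      by (intro Bochner_Integration.integral_cong refl sum.cong) (simp add: mult_ac)
    also have "\<dots> = (\<Sum>l<m. (\<integral>\<mu>s. (\<Sum>l'<m. omega \<delta> t l * omega \<delta> t l' * (Y l \<mu>s * Y l' \<mu>s)) \<partial>?P))"
      by (rule Bochner_Integration.integral_sum, rule Bochner_Integration.integrable_sum) (use YYint in auto)
    also have "\<dots> = (\<Sum>l<m. \<Sum>l'<m. (\<integral>\<mu>s. omega \<delta> t l * omega \<delta> t l' * (Y l \<mu>s * Y l' \<mu>s) \<partial>?P))"
      by (intro sum.cong refl Bochner_Integration.integral_sum) (use YYint in auto)
    also have "\<dots> = (\<Sum>l<m. \<Sum>l'<m. omega \<delta> t l * omega \<delta> t l' * (\<integral>\<mu>s. Y l \<mu>s * Y l' \<mu>s \<partial>?P))"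
      by simp
    finally show ?thesis .
  qed
  also have "\<dots> = (\<Sum>l<m. (omega \<delta> t l)^2 * (\<integral>\<mu>s. Y l \<mu>s * Y l \<mu>s \<partial>?P))"
  proof (intro sum.cong refl)
    fix l assume l: "l \<in> {..<m}"
    have "(\<Sum>l'<m. omega \<delta> t l * omega \<delta> t l' * (\<integral>\<mu>s. Y l \<mu>s * Y l' \<mu>s \<partial>?P))
        = omega \<delta> t l * omega \<delta> t l * (\<integral>\<mu>s. Y l \<mu>s * Y l \<mu>s \<partial>?P)
          + (\<Sum>l'\<in>{..<m}-{l}. omega \<delta> t l * omega \<delta> t l' * (\<integral>\<mu>s. Y l \<mu>s * Y l' \<mu>s \<partial>?P))"
      using l by (intro sum.remove) auto
    also have "(\<Sum>l'\<in>{..<m}-{l}. omega \<delta> t l * omega \<delta> t l' * (\<integral>\<mu>s. Y l \<mu>s * Y l' \<mu>s \<partial>?P)) = 0"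
      using l by (intro sum.neutral) (auto simp: Y_def cross)
    finally show "(\<Sum>l'<m. omega \<delta> t l * omega \<delta> t l' * (\<integral>\<mu>s. Y l \<mu>s * Y l' \<mu>s \<partial>?P))
        = (omega \<delta> t l)^2 * (\<integral>\<mu>s. Y l \<mu>s * Y l \<mu>s \<partial>?P)" by (simp add: power2_eq_square)
  qed
  also have "\<dots> \<le> (\<Sum>l<m. (omega \<delta> t l)^2 * (bl l)^2)"
    by (intro sum_mono mult_left_mono) (auto simp: Y_def diag)
  finally show ?thesis by (simp add: ennreal_leI)
qed

end


context sixp begin

definition Wt :: real where "Wt = (\<integral>x. w x \<partial>lborel)"
definition Vb :: real where "Vb = (\<Sum>l<m. (omega \<delta> t l)^2 * (bl l)^2)"

lemma comp_meas: "l < m \<Longrightarrow> (\<lambda>\<mu>s. \<mu>s l) \<in> borel_measurable (PiM {..<m} Mp)"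
proof -
  assume l: "l < m"
  have "(\<lambda>\<mu>s. \<mu>s l) \<in> measurable (PiM {..<m} Mp) (Mp l)"
    by (rule measurable_component_singleton) (use l in auto)
  then show ?thesis by (simp add: measurable_cong_sets[OF refl sets_Mp])
qed

lemma stepB: "(\<integral>\<^sup>+\<mu>s. NN m t \<mu>s \<partial>ordinate_law m t) \<le> ennreal (Wt^2 * Vb)"
proof -
  let ?L = "PiM {..<m} Mp"
  interpret L: prob_space ?L by (rule prob_space_PiM) (rule prob_Mp)
  interpret LB: pair_sigma_finite ?L lborel
    unfolding pair_sigma_finite_def using L.sigma_finite_measure_axioms lborel.sigma_finite_measure_axioms by auto
  define F where "F \<mu>s x y = ennreal (w x * w y * (Dk m t \<mu>s x y)^2)" for \<mu>s x y
  have m3: "(\<lambda>z::((nat\<Rightarrow>real)\<times>real)\<times>real. Dk m t (fst (fst z)) (snd (fst z)) (snd z)) \<in> borel_measurable ((?L \<Otimes>\<^sub>M lborel) \<Otimes>\<^sub>M lborel)"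
  proof (rule Dk_meas)
    fix l assume "l < m"
    then show "(\<lambda>z::((nat\<Rightarrow>real)\<times>real)\<times>real. fst (fst z) l) \<in> borel_measurable ((?L \<Otimes>\<^sub>M lborel) \<Otimes>\<^sub>M lborel)"
      by (intro measurable_compose[OF measurable_compose[OF measurable_fst measurable_fst] comp_meas])
  qed auto
  have F3[measurable]: "(\<lambda>(z,y). F (fst z) (snd z) y) \<in> borel_measurable ((?L \<Otimes>\<^sub>M lborel) \<Otimes>\<^sub>M lborel)"
    unfolding F_def using m3 by (simp add: case_prod_beta')
  have m2: "(\<lambda>z::(nat\<Rightarrow>real)\<times>real. Dk m t (fst z) x (snd z)) \<in> borel_measurable (?L \<Otimes>\<^sub>M lborel)" for x
  proof (rule Dk_meas)
    fix l assume "l < m"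
    then show "(\<lambda>z::(nat\<Rightarrow>real)\<times>real. fst z l) \<in> borel_measurable (?L \<Otimes>\<^sub>M lborel)"
      by (intro measurable_compose[OF measurable_fst comp_meas])
  qed auto
  have F2: "(\<lambda>(\<mu>s,y). F \<mu>s x y) \<in> borel_measurable (?L \<Otimes>\<^sub>M lborel)" for x
    unfolding F_def using m2[of x] by (simp add: case_prod_beta')
  have F2': "(\<lambda>(\<mu>s,x). \<integral>\<^sup>+y. F \<mu>s x y \<partial>lborel) \<in> borel_measurable (?L \<Otimes>\<^sub>M lborel)"
  proof -
    have "(\<lambda>z. \<integral>\<^sup>+y. F (fst z) (snd z) y \<partial>lborel) \<in> borel_measurable (?L \<Otimes>\<^sub>M lborel)"
      using F3 by (rule lborel.borel_measurable_nn_integral)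
    then show ?thesis by (simp add: case_prod_beta')
  qed
  have Dm: "(\<lambda>\<mu>s. Dk m t \<mu>s x y) \<in> borel_measurable ?L" for x y
    by (rule Dk_meas) (auto intro: comp_meas)
  have "(\<integral>\<^sup>+\<mu>s. NN m t \<mu>s \<partial>ordinate_law m t) = (\<integral>\<^sup>+\<mu>s. \<integral>\<^sup>+x. \<integral>\<^sup>+y. F \<mu>s x y \<partial>lborel \<partial>lborel \<partial>?L)"
    unfolding law_eq NN_def F_def ..
  also have "\<dots> = (\<integral>\<^sup>+x. \<integral>\<^sup>+\<mu>s. \<integral>\<^sup>+y. F \<mu>s x y \<partial>lborel \<partial>?L \<partial>lborel)"
    using LB.Fubini'[OF F2'] by simp
  also have "\<dots> = (\<integral>\<^sup>+x. \<integral>\<^sup>+y. \<integral>\<^sup>+\<mu>s. F \<mu>s x y \<partial>?L \<partial>lborel \<partial>lborel)"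
    by (intro nn_integral_cong LB.Fubini'[symmetric] F2)
  also have "\<dots> \<le> (\<integral>\<^sup>+x. \<integral>\<^sup>+y. ennreal (w x) * ennreal (w y) * ennreal Vb \<partial>lborel \<partial>lborel)"
  proof (intro nn_integral_mono)
    fix x y
    have "(\<integral>\<^sup>+\<mu>s. F \<mu>s x y \<partial>?L) = (\<integral>\<^sup>+\<mu>s. ennreal (w x * w y) * ennreal ((Dk m t \<mu>s x y)^2) \<partial>?L)"
      unfolding F_def using w_nonneg by (intro nn_integral_cong) (simp add: ennreal_mult)
    also have "\<dots> = ennreal (w x * w y) * (\<integral>\<^sup>+\<mu>s. ennreal ((Dk m t \<mu>s x y)^2) \<partial>?L)"
      using Dm by (intro nn_integral_cmult) auto
    also have "\<dots> \<le> ennreal (w x * w y) * ennreal Vb"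
      using stepC[of x y] unfolding law_eq Vb_def by (intro mult_left_mono) auto
    finally show "(\<integral>\<^sup>+\<mu>s. F \<mu>s x y \<partial>?L) \<le> ennreal (w x) * ennreal (w y) * ennreal Vb"
      using w_nonneg by (simp add: ennreal_mult)
  qed
  also have "\<dots> = ennreal (Wt^2 * Vb)"
  proof -
    have Ww: "(\<integral>\<^sup>+y. ennreal (w y) \<partial>lborel) = ennreal Wt"
      unfolding Wt_def using w_int w_nonneg by (intro nn_integral_eq_integral) auto
    have Wt0: "0 \<le> Wt" unfolding Wt_def using w_nonneg by (intro Bochner_Integration.integral_nonneg) auto
    have V0: "0 \<le> Vb" unfolding Vb_def by (intro sum_nonneg) auto
    have "(\<integral>\<^sup>+x. \<integral>\<^sup>+y. ennreal (w x) * ennreal (w y) * ennreal Vb \<partial>lborel \<partial>lborel)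
        = (\<integral>\<^sup>+x. ennreal (w x) * (ennreal Vb * ennreal Wt) \<partial>lborel)"
    proof (intro nn_integral_cong)
      fix x
      have "(\<integral>\<^sup>+y. ennreal (w x) * ennreal (w y) * ennreal Vb \<partial>lborel) = (\<integral>\<^sup>+y. (ennreal (w x) * ennreal Vb) * ennreal (w y) \<partial>lborel)"
        by (intro nn_integral_cong) (simp add: mult_ac)
      also have "\<dots> = (ennreal (w x) * ennreal Vb) * ennreal Wt" by (subst nn_integral_cmult) (auto simp: Ww)
      finally show "(\<integral>\<^sup>+y. ennreal (w x) * ennreal (w y) * ennreal Vb \<partial>lborel) = ennreal (w x) * (ennreal Vb * ennreal Wt)"
        by (simp add: mult_ac)
    qed
    also have "\<dots> = ennreal Wt * (ennreal Vb * ennreal Wt)"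
      by (subst nn_integral_multc) (auto simp: Ww)
    also have "\<dots> = ennreal (Wt^2 * Vb)" using Wt0 V0 by (simp add: ennreal_mult[symmetric] power2_eq_square mult_ac)
    finally show ?thesis .
  qed
  finally show ?thesis .
qed

end


context sixp begin

lemma Vb_bound: assumes ab: "\<forall>l<m. real (2 * m) * omega \<delta> t l \<le> \<alpha>"
  shows "Vb \<le> 2 * LL^2 * Sm^2 * \<alpha>^4 / (real (2*m))^3"
proof -
  define n where "n = real (2*m)"
  have n0: "0 < n" unfolding n_def using m1 by auto
  have om0: "0 \<le> omega \<delta> t l" if "l < m" for l
    using len_pos[OF that] Sm_pos by (simp add: omega_eq)
  have ob: "omega \<delta> t l \<le> \<alpha> / n" if "l < m" for l
    using ab that n0 unfolding n_def by (simp add: field_simps mult.commute)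
  have "Vb = (\<Sum>l<m. 4 * LL^2 * Sm^2 * (omega \<delta> t l)^4)"
    unfolding Vb_def bl_def
  proof (intro sum.cong refl)
    fix l assume "l \<in> {..<m}"
    have "len l = omega \<delta> t l * Sm" using Sm_pos by (simp add: omega_eq)
    then show "(omega \<delta> t l)^2 * (2 * LL * len l)^2 = 4 * LL^2 * Sm^2 * (omega \<delta> t l)^4"
      by (simp add: power2_eq_square power4_eq_xxxx)
  qed
  also have "\<dots> \<le> (\<Sum>l<m. 4 * LL^2 * Sm^2 * (\<alpha> / n)^4)"
  proof (intro sum_mono mult_left_mono)
    fix l assume "l \<in> {..<m}"
    then show "(omega \<delta> t l)^4 \<le> (\<alpha> / n)^4" using om0 ob by (intro power_mono) auto
  qed auto
  also have "\<dots> = real m * 4 * LL^2 * Sm^2 * \<alpha>^4 / n^4" by (simp add: power_divide)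
  also have "\<dots> = 2 * LL^2 * Sm^2 * \<alpha>^4 / n^3"
    using n0 unfolding n_def by (simp add: field_simps power_def eval_nat_numeral)
  finally show ?thesis unfolding n_def .
qed

end

theorem mainTheorem6:
  fixes xL xR \<delta> \<alpha>bar :: real and sT sS :: "real \<Rightarrow> real"
  assumes "xL < xR"
    and "continuous_on {xL..xR} sT" and "continuous_on {xL..xR} sS"
    and "\<forall>x\<in>{xL..xR}. 0 < sS x \<and> sS x < sT x"
    and "0 < \<delta>" and "\<delta> < 1"
  shows "\<exists>C::real. \<forall>(m::nat) (t::nat \<Rightarrow> real).
           1 \<le> m \<and> t 0 = -1 \<and> t m = -\<delta> \<and> (\<forall>l<m. t l < t (Suc l))
           \<and> (\<forall>l<m. real (2 * m) * omega \<delta> t l \<le> \<alpha>bar)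
           \<longrightarrow> (\<integral>\<^sup>+ \<mu>s. (opnorm xL xR sT (dTxi xL xR sT sS \<delta> m t \<mu>s))\<^sup>2 \<partial>ordinate_law m t)
               \<le> ennreal (C * (ln (real (2 * m)) + 1) * real (2 * m) powr (-3))"
proof -
  interpret S: six xL xR sT sS \<delta> using assms by unfold_locales auto
  define C where "C = 2 * (\<integral>x. S.w x \<partial>lborel)^2 * S.LL^2 * S.Sm^2 * \<alpha>bar^4"
  show ?thesis
  proof (intro exI[of _ C] allI impI)
    fix m :: nat and t :: "nat \<Rightarrow> real"
    assume H: "1 \<le> m \<and> t 0 = -1 \<and> t m = -\<delta> \<and> (\<forall>l<m. t l < t (Suc l))
           \<and> (\<forall>l<m. real (2 * m) * omega \<delta> t l \<le> \<alpha>bar)"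
    interpret T: sixp xL xR sT sS \<delta> m t using assms H by unfold_locales auto
    define n where "n = real (2*m)"
    have n1: "1 \<le> n" unfolding n_def using H by auto
    have Wt0: "0 \<le> T.Wt" unfolding T.Wt_def using S.w_nonneg
      by (intro Bochner_Integration.integral_nonneg) auto
    have C0: "0 \<le> C" unfolding C_def by simp
    have "(\<integral>\<^sup>+ \<mu>s. (opnorm xL xR sT (dTxi xL xR sT sS \<delta> m t \<mu>s))\<^sup>2 \<partial>ordinate_law m t)
        \<le> (\<integral>\<^sup>+ \<mu>s. S.NN m t \<mu>s \<partial>ordinate_law m t)"
      by (intro nn_integral_mono S.stepA)
    also have "\<dots> \<le> ennreal (T.Wt^2 * T.Vb)" by (rule T.stepB)
    also have "\<dots> \<le> ennreal (C * (ln n + 1) * n powr (-3))"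
    proof (rule ennreal_leI)
      have "T.Wt^2 * T.Vb \<le> T.Wt^2 * (2 * S.LL^2 * S.Sm^2 * \<alpha>bar^4 / n^3)"
        using T.Vb_bound[of \<alpha>bar] H unfolding n_def by (intro mult_left_mono) auto
      also have "\<dots> = C / n^3" unfolding C_def T.Wt_def by simp
      also have "\<dots> \<le> C * (ln n + 1) / n^3"
        using n1 C0 by (intro divide_right_mono) (auto intro!: mult_le_cancel_left1[THEN iffD2])
      also have "\<dots> = C * (ln n + 1) * n powr (-3)"
        using n1 by (simp add: powr_minus powr_realpow divide_inverse)
      finally show "T.Wt^2 * T.Vb \<le> C * (ln n + 1) * n powr (-3)" .
    qed
    finally show "(\<integral>\<^sup>+ \<mu>s. (opnorm xL xR sT (dTxi xL xR sT sS \<delta> m t \<mu>s))\<^sup>2 \<partial>ordinate_law m t)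
               \<le> ennreal (C * (ln (real (2 * m)) + 1) * real (2 * m) powr (-3))"
      unfolding n_def .
  qed
qed


end
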